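(* Let $\mathcal T,\mathcal A,\mathcal B,\mathcal C$ be 4-PI operators as below, and assume the auxiliary PIE and the dual auxiliary PIE are well-posed. Suppose there exist $\gamma>0$ and a 4-PI operator $\mathcal Q:\mathbb{R}L_2^{m,n}[a,b]\to\mathbb{R}L_2^{m,n}[a,b]$ with $\mathcal Q\succeq0$ such that one of the following holds: (i) $\mathcal B^*\mathcal Q\mathcal B\preceq I$, $\ \mathcal A^*\mathcal Q\mathcal T+\mathcal T^*\mathcal Q\mathcal A\preceq0$, $\ \frac{1}{\gamma^2}\mathcal C^*\mathcal C\preceq\mathcal T^*\mathcal Q\mathcal T$; (ii) $\mathcal C\mathcal Q\mathcal C^*\preceq I$, $\ \mathcal A\mathcal Q\mathcal T^*+\mathcal T\mathcal Q\mathcal A^*\preceq0$, $\ \frac{1}{\gamma^2}\mathcal B\mathcal B^*\preceq\mathcal T\mathcal Q\mathcal T^*$. Then $\|G(\mathcal T,\mathcal A,\mathcal B,\mathcal C)\|_{ip}\le\gamma$.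
   Context: Notation: $\mathbb{R}L_2^{m,n}[a,b]:=\mathbb{R}^m\times L_2^n[a,b]$, the Hilbert space with inner product $\langle (x,\mathbf x),(y,\mathbf y)\rangle=x^\top y+\int_a^b \mathbf x(s)^\top\mathbf y(s)\,ds$. Finite-dimensional spaces $\mathbb{R}^k$ carry the Euclidean inner product and norm, and are identified with $\mathbb{R}L_2^{k,0}$. $\mathcal P^*$ denotes the Hilbert adjoint. For a bounded operator $\mathcal P$ on a Hilbert space $H$, $\mathcal P\succeq0$ means $\mathcal P$ is self-adjoint and $\langle h,\mathcal Ph\rangle\ge0$ for all $h\in H$; $\mathcal P\preceq\mathcal R$ means $\mathcal R-\mathcal P\succeq0$; $I$ is the identity. A 4-PI operator $\mathcal P:\mathbb{R}L_2^{m_1,n_1}[a,b]\to\mathbb{R}L_2^{m_2,n_2}[a,b]$ is one of the form $$\mathcal P\begin{bmatrix}x\\ \mathbf x\end{bmatrix}(s)=\begin{bmatrix}Px+\int_a^b Q_1(\theta)\mathbf x(\theta)\,d\theta\\ Q_2(s)x+R_0(s)\mathbf x(s)+\int_a^s R_1(s,\theta)\mathbf x(\theta)\,d\theta+\int_s^b R_2(s,\theta)\mathbf x(\theta)\,d\theta\end{bmatrix},$$ with $P$ a real matrix and $Q_1,Q_2,R_0,R_1,R_2$ real matrix-valued polynomials. Here $\mathcal T,\mathcal A:\mathbb{R}L_2^{m,n}[a,b]\to\mathbb{R}L_2^{m,n}[a,b]$, $\mathcal B:\mathbb{R}^{n_w}\to\mathbb{R}L_2^{m,n}[a,b]$, $\mathcal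 C:\mathbb{R}L_2^{m,n}[a,b]\to\mathbb{R}^{n_z}$ are 4-PI operators. Auxiliary PIE: given $v\in\mathbb{R}^{n_w}$, a solution is a continuously differentiable $\mathbf x:[0,\infty)\to\mathbb{R}L_2^{m,n}[a,b]$ with $\frac{d}{dt}(\mathcal T\mathbf x(t))=\mathcal A\mathbf x(t)$ for all $t\ge0$, $\mathcal T\mathbf x(0)=\mathcal Bv$, and output $z(t)=\mathcal C\mathbf x(t)$; it is well-posed if for each $v$ a unique solution exists. Dual auxiliary PIE: given $\bar v\in\mathbb{R}^{n_z}$, a solution is a continuously differentiable $\bar{\mathbf x}:[0,\infty)\to\mathbb{R}L_2^{m,n}[a,b]$ with $\frac{d}{dt}(\mathcal T^*\bar{\mathbf x}(t))=\mathcal A^*\bar{\mathbf x}(t)$, $\mathcal T^*\bar{\mathbf x}(0)=\mathcal C^*\bar v$, output $\bar z(t)=\mathcal B^*\bar{\mathbf x}(t)$; well-posed analogously. Impulse-to-peak norm: $\|G(\mathcal T,\mathcal A,\mathcal B,\mathcal C)\|_{ip}:=\sup\{\sup_{t\ge0}\|z(t)\|:\|v\|=1,\ z\text{ output of a solution of the auxiliary PIE with data }v\}$. *)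

theory Defs
  imports "HOL-Analysis.Analysis" "HOL-Computational_Algebra.Polynomial" "Jordan_Normal_Form.Matrix"
begin

text \<open>An element of RL2^{m,n}[a,b] is represented by a pair (x, f) with x a real vector of
dimension m and f a function on the reals whose values on [a,b] are real vectors of dimension n,
each component being Lebesgue measurable and square integrable on [a,b]. Values outside [a,b]
are irrelevant. R^k is identified with RL2^{k,0}[a,b].\<close>

type_synonym rl2 = "real vec \<times> (real \<Rightarrow> real vec)"

definition in_RL2 :: "real \<Rightarrow> real \<Rightarrow> nat \<Rightarrow> nat \<Rightarrow> rl2 \<Rightarrow> bool" where
  "in_RL2 a b m n u \<longleftrightarrow>
     fst u \<in> carrier_vec m \<and> (\<forall>s\<in>{a..b}. snd u s \<in> carrier_vec n) \<and>
     (\<forall>i<n. set_borel_measurable lborel {a..b} (\<lambda>s. vec_index (snd u s) i) \<and>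
            set_integrable lborel {a..b} (\<lambda>s. (vec_index (snd u s) i)^2))"

definition RL2 :: "real \<Rightarrow> real \<Rightarrow> nat \<Rightarrow> nat \<Rightarrow> rl2 set" where
  "RL2 a b m n = {u. in_RL2 a b m n u}"

definition rl2_inner :: "real \<Rightarrow> real \<Rightarrow> rl2 \<Rightarrow> rl2 \<Rightarrow> real" where
  "rl2_inner a b u v = scalar_prod (fst u) (fst v) +
     (LINT s:{a..b}|lborel. scalar_prod (snd u s) (snd v s))"

definition rl2_norm :: "real \<Rightarrow> real \<Rightarrow> rl2 \<Rightarrow> real" where
  "rl2_norm a b u = sqrt (rl2_inner a b u u)"

definition rl2_add :: "rl2 \<Rightarrow> rl2 \<Rightarrow> rl2" where
  "rl2_add u v = (fst u + fst v, \<lambda>s. snd u s + snd v s)"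

definition rl2_sub :: "rl2 \<Rightarrow> rl2 \<Rightarrow> rl2" where
  "rl2_sub u v = (fst u - fst v, \<lambda>s. snd u s - snd v s)"

definition rl2_scale :: "real \<Rightarrow> rl2 \<Rightarrow> rl2" where
  "rl2_scale c u = (smult_vec c (fst u), \<lambda>s. smult_vec c (snd u s))"

definition rl2_dist :: "real \<Rightarrow> real \<Rightarrow> rl2 \<Rightarrow> rl2 \<Rightarrow> real" where
  "rl2_dist a b u v = rl2_norm a b (rl2_sub u v)"

text \<open>Data of a 4-PI operator: a real matrix P and matrix-valued polynomials Q1, Q2, R0
(univariate, entries of type real poly) and R1, R2 (bivariate in (s,theta); an entry
p :: real poly poly denotes the polynomial function (s,theta) |-> poly (poly p [:theta:]) s).\<close>

record pi4 =
  pi_P  :: "real mat"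
  pi_Q1 :: "real poly mat"
  pi_Q2 :: "real poly mat"
  pi_R0 :: "real poly mat"
  pi_R1 :: "real poly poly mat"
  pi_R2 :: "real poly poly mat"

definition eval1 :: "real poly mat \<Rightarrow> real \<Rightarrow> real mat" where
  "eval1 M s = map_mat (\<lambda>p. poly p s) M"

definition eval2 :: "real poly poly mat \<Rightarrow> real \<Rightarrow> real \<Rightarrow> real mat" where
  "eval2 M s \<theta> = map_mat (\<lambda>p. poly (poly p [:\<theta>:]) s) M"

definition is_pi4 :: "nat \<Rightarrow> nat \<Rightarrow> nat \<Rightarrow> nat \<Rightarrow> pi4 \<Rightarrow> bool" where
  "is_pi4 m1 n1 m2 n2 D \<longleftrightarrow>
     pi_P D \<in> carrier_mat m2 m1 \<and> pi_Q1 D \<in> carrier_mat m2 n1 \<and>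
     pi_Q2 D \<in> carrier_mat n2 m1 \<and> pi_R0 D \<in> carrier_mat n2 n1 \<and>
     pi_R1 D \<in> carrier_mat n2 n1 \<and> pi_R2 D \<in> carrier_mat n2 n1"

definition pi_op :: "real \<Rightarrow> real \<Rightarrow> pi4 \<Rightarrow> rl2 \<Rightarrow> rl2" where
  "pi_op a b D u =
    (vec (dim_row (pi_P D)) (\<lambda>i.
        vec_index (mult_mat_vec (pi_P D) (fst u)) i +
        (LINT \<theta>:{a..b}|lborel. vec_index (mult_mat_vec (eval1 (pi_Q1 D) \<theta>) (snd u \<theta>)) i)),
     \<lambda>s. vec (dim_row (pi_R0 D)) (\<lambda>i.
        vec_index (mult_mat_vec (eval1 (pi_Q2 D) s) (fst u)) i +
        vec_index (mult_mat_vec (eval1 (pi_R0 D) s) (snd u s)) i +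
        (LINT \<theta>:{a..s}|lborel. vec_index (mult_mat_vec (eval2 (pi_R1 D) s \<theta>) (snd u \<theta>)) i) +
        (LINT \<theta>:{s..b}|lborel. vec_index (mult_mat_vec (eval2 (pi_R2 D) s \<theta>) (snd u \<theta>)) i)))"

definition is_adjoint :: "real \<Rightarrow> real \<Rightarrow> rl2 set \<Rightarrow> rl2 set \<Rightarrow> (rl2 \<Rightarrow> rl2) \<Rightarrow> (rl2 \<Rightarrow> rl2) \<Rightarrow> bool" where
  "is_adjoint a b H1 H2 F G \<longleftrightarrow>
     (\<forall>v\<in>H2. G v \<in> H1) \<and> (\<forall>u\<in>H1. \<forall>v\<in>H2. rl2_inner a b (F u) v = rl2_inner a b u (G v))"

definition op_psd :: "real \<Rightarrow> real \<Rightarrow> rl2 set \<Rightarrow> (rl2 \<Rightarrow> rl2) \<Rightarrow> bool" where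
  "op_psd a b H P \<longleftrightarrow>
     (\<forall>u\<in>H. \<forall>v\<in>H. rl2_inner a b (P u) v = rl2_inner a b u (P v)) \<and>
     (\<forall>h\<in>H. rl2_inner a b h (P h) \<ge> 0)"

definition op_le :: "real \<Rightarrow> real \<Rightarrow> rl2 set \<Rightarrow> (rl2 \<Rightarrow> rl2) \<Rightarrow> (rl2 \<Rightarrow> rl2) \<Rightarrow> bool" where
  "op_le a b H P R \<longleftrightarrow> op_psd a b H (\<lambda>u. rl2_sub (R u) (P u))"

definition op_zero :: "nat \<Rightarrow> nat \<Rightarrow> rl2 \<Rightarrow> rl2" where
  "op_zero m n u = (0\<^sub>v m, \<lambda>s. 0\<^sub>v n)"

definition has_rl2_deriv :: "real \<Rightarrow> real \<Rightarrow> (real \<Rightarrow> rl2) \<Rightarrow> rl2 \<Rightarrow> real \<Rightarrow> bool" where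
  "has_rl2_deriv a b y D t \<longleftrightarrow>
     ((\<lambda>h. rl2_norm a b (rl2_sub (rl2_scale (1 / h) (rl2_sub (y (t + h)) (y t))) D))
        \<longlongrightarrow> 0) (at 0 within {-t..})"

definition rl2_C1 :: "real \<Rightarrow> real \<Rightarrow> rl2 set \<Rightarrow> (real \<Rightarrow> rl2) \<Rightarrow> bool" where
  "rl2_C1 a b H x \<longleftrightarrow>
     (\<exists>x'. (\<forall>t\<ge>0. x t \<in> H \<and> x' t \<in> H \<and> has_rl2_deriv a b x (x' t) t) \<and>
           (\<forall>t\<ge>0. ((\<lambda>\<tau>. rl2_dist a b (x' \<tau>) (x' t)) \<longlongrightarrow> 0) (at t within {0..})))"

text \<open>Solution of d/dt (T x(t)) = A x(t), T x(0) = B v, with state space H. Equalities in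
RL2 are understood in the L2 sense (distance zero).\<close>

definition pie_solution :: "real \<Rightarrow> real \<Rightarrow> rl2 set \<Rightarrow> (rl2 \<Rightarrow> rl2) \<Rightarrow> (rl2 \<Rightarrow> rl2) \<Rightarrow>
    (rl2 \<Rightarrow> rl2) \<Rightarrow> rl2 \<Rightarrow> (real \<Rightarrow> rl2) \<Rightarrow> bool" where
  "pie_solution a b H T A B v x \<longleftrightarrow>
     rl2_C1 a b H x \<and>
     (\<forall>t\<ge>0. has_rl2_deriv a b (\<lambda>\<tau>. T (x \<tau>)) (A (x t)) t) \<and>
     rl2_dist a b (T (x 0)) (B v) = 0"

definition pie_well_posed :: "real \<Rightarrow> real \<Rightarrow> rl2 set \<Rightarrow> rl2 set \<Rightarrow> (rl2 \<Rightarrow> rl2) \<Rightarrow>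
    (rl2 \<Rightarrow> rl2) \<Rightarrow> (rl2 \<Rightarrow> rl2) \<Rightarrow> bool" where
  "pie_well_posed a b H V T A B \<longleftrightarrow>
     (\<forall>v\<in>V. (\<exists>x. pie_solution a b H T A B v x) \<and>
        (\<forall>x y. pie_solution a b H T A B v x \<and> pie_solution a b H T A B v y \<longrightarrow>
               (\<forall>t\<ge>0. rl2_dist a b (x t) (y t) = 0)))"

definition ip_norm :: "real \<Rightarrow> real \<Rightarrow> rl2 set \<Rightarrow> rl2 set \<Rightarrow> (rl2 \<Rightarrow> rl2) \<Rightarrow> (rl2 \<Rightarrow> rl2) \<Rightarrow>
    (rl2 \<Rightarrow> rl2) \<Rightarrow> (rl2 \<Rightarrow> rl2) \<Rightarrow> ereal" where
  "ip_norm a b H V T A B C =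
     (SUP p \<in> {(v, x, t). v \<in> V \<and> rl2_norm a b v = 1 \<and> pie_solution a b H T A B v x \<and> t \<ge> 0}.
        ereal (rl2_norm a b (C ((fst (snd p)) (snd (snd p))))))"

end

theory Submission
  imports Defs
begin


definition ut :: "real \<Rightarrow> real \<Rightarrow> rl2 \<Rightarrow> nat \<Rightarrow> real \<Rightarrow> real" where
  "ut a b u i s = indicator {a..b} s * vec_index (snd u s) i"

lemma ind_sq: "(indicator A s * (x::real))^2 = indicator A s * x^2"
  by (simp split: split_indicator)

lemma RL2_iff:
  "u \<in> RL2 a b m n \<longleftrightarrow> fst u \<in> carrier_vec m \<and> (\<forall>s\<in>{a..b}. snd u s \<in> carrier_vec n) \<and>
     (\<forall>i<n. ut a b u i \<in> borel_measurable lborel \<and> integrable lborel (\<lambda>s. (ut a b u i s)^2))"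
  unfolding RL2_def in_RL2_def ut_def set_integrable_def set_borel_measurable_def
  by (simp add: ind_sq)

lemma sq_int_mult:
  fixes f g :: "real \<Rightarrow> real"
  assumes "f \<in> borel_measurable lborel" "g \<in> borel_measurable lborel"
    "integrable lborel (\<lambda>s. f s^2)" "integrable lborel (\<lambda>s. g s^2)"
  shows "integrable lborel (\<lambda>s. f s * g s)"
proof (rule Bochner_Integration.integrable_bound[where f="\<lambda>s. (f s^2 + g s^2)/2"])
  show "integrable lborel (\<lambda>s. (f s^2 + g s^2)/2)" using assms by auto
  show "(\<lambda>s. f s * g s) \<in> borel_measurable lborel" using assms by measurable
  show "AE x in lborel. norm (f x * g x) \<le> norm ((f x^2 + g x^2)/2)"
  proof (rule AE_I2)
    fix x
    have "0 \<le> (\<bar>f x\<bar> - \<bar>g x\<bar>)^2" by simp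
    also have "\<dots> = f x^2 + g x^2 - 2 * \<bar>f x * g x\<bar>"
      by (simp add: power2_diff abs_mult)
    finally have "2 * \<bar>f x * g x\<bar> \<le> f x^2 + g x^2" by simp
    then show "norm (f x * g x) \<le> norm ((f x^2 + g x^2)/2)" by auto
  qed
qed

lemma sp_sum: "v \<in> carrier_vec n \<Longrightarrow> w \<in> carrier_vec n \<Longrightarrow>
   scalar_prod v w = (\<Sum>i<n. vec_index v i * vec_index w i)"
  by (simp add: scalar_prod_def atLeast0LessThan)

lemma RL2_fst: "u \<in> RL2 a b m n \<Longrightarrow> fst u \<in> carrier_vec m"
  by (simp add: RL2_iff)
lemma RL2_snd: "u \<in> RL2 a b m n \<Longrightarrow> s \<in> {a..b} \<Longrightarrow> snd u s \<in> carrier_vec n"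
  by (simp add: RL2_iff)
lemma RL2_meas: "u \<in> RL2 a b m n \<Longrightarrow> i < n \<Longrightarrow> ut a b u i \<in> borel_measurable lborel"
  by (simp add: RL2_iff)
lemma RL2_sq: "u \<in> RL2 a b m n \<Longrightarrow> i < n \<Longrightarrow> integrable lborel (\<lambda>s. (ut a b u i s)^2)"
  by (simp add: RL2_iff)

lemma RL2_prod_int: "u \<in> RL2 a b m n \<Longrightarrow> v \<in> RL2 a b m n \<Longrightarrow> i < n \<Longrightarrow>
   integrable lborel (\<lambda>s. ut a b u i s * ut a b v i s)"
  by (rule sq_int_mult; (rule RL2_meas RL2_sq; assumption)?; (rule RL2_meas RL2_sq; assumption)?)

lemma inner_formula:
  assumes u: "u \<in> RL2 a b m n" and v: "v \<in> RL2 a b m n"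
  shows "rl2_inner a b u v = (\<Sum>j<m. vec_index (fst u) j * vec_index (fst v) j) +
     (\<Sum>i<n. \<integral>s. ut a b u i s * ut a b v i s \<partial>lborel)"
proof -
  have 1: "scalar_prod (fst u) (fst v) = (\<Sum>j<m. vec_index (fst u) j * vec_index (fst v) j)"
    using u v by (intro sp_sum RL2_fst)
  have 2: "(\<lambda>s. indicator {a..b} s *\<^sub>R scalar_prod (snd u s) (snd v s)) =
      (\<lambda>s. \<Sum>i<n. ut a b u i s * ut a b v i s)"
  proof
    fix s
    show "indicator {a..b} s *\<^sub>R scalar_prod (snd u s) (snd v s) = (\<Sum>i<n. ut a b u i s * ut a b v i s)"
    proof (cases "s \<in> {a..b}")
      case True
      then show ?thesis using sp_sum[OF RL2_snd[OF u True] RL2_snd[OF v True]]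
        by (simp add: ut_def)
    next
      case False
      then show ?thesis by (simp add: ut_def)
    qed
  qed
  have 3: "(\<integral>s. (\<Sum>i<n. ut a b u i s * ut a b v i s) \<partial>lborel) =
     (\<Sum>i<n. \<integral>s. ut a b u i s * ut a b v i s \<partial>lborel)"
    by (rule Bochner_Integration.integral_sum) (rule RL2_prod_int[OF u v], simp)
  show ?thesis unfolding rl2_inner_def set_lebesgue_integral_def 1 2 3 ..
qed

lemma ut_add: "u \<in> RL2 a b m n \<Longrightarrow> v \<in> RL2 a b m n \<Longrightarrow> i < n \<Longrightarrow>
    ut a b (rl2_add u v) i s = ut a b u i s + ut a b v i s"
  by (cases "s \<in> {a..b}") (auto simp: ut_def rl2_add_def dest!: RL2_snd[where s=s] simp: algebra_simps)

lemma ut_sub: "u \<in> RL2 a b m n \<Longrightarrow> v \<in> RL2 a b m n \<Longrightarrow> i < n \<Longrightarrow>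
    ut a b (rl2_sub u v) i s = ut a b u i s - ut a b v i s"
  by (cases "s \<in> {a..b}") (auto simp: ut_def rl2_sub_def dest!: RL2_snd[where s=s] simp: algebra_simps)

lemma ut_scale: "u \<in> RL2 a b m n \<Longrightarrow> i < n \<Longrightarrow>
    ut a b (rl2_scale c u) i s = c * ut a b u i s"
  by (cases "s \<in> {a..b}") (auto simp: ut_def rl2_scale_def dest!: RL2_snd[where s=s] simp: algebra_simps)

lemma fst_add: "u \<in> RL2 a b m n \<Longrightarrow> v \<in> RL2 a b m n \<Longrightarrow> j < m \<Longrightarrow>
    vec_index (fst (rl2_add u v)) j = vec_index (fst u) j + vec_index (fst v) j"
  by (auto simp: rl2_add_def dest!: RL2_fst)
lemma fst_sub: "u \<in> RL2 a b m n \<Longrightarrow> v \<in> RL2 a b m n \<Longrightarrow> j < m \<Longrightarrow>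
    vec_index (fst (rl2_sub u v)) j = vec_index (fst u) j - vec_index (fst v) j"
  by (auto simp: rl2_sub_def dest!: RL2_fst)
lemma fst_scale: "u \<in> RL2 a b m n \<Longrightarrow> j < m \<Longrightarrow>
    vec_index (fst (rl2_scale c u)) j = c * vec_index (fst u) j"
  by (auto simp: rl2_scale_def dest!: RL2_fst)

lemma int_sq_add: "integrable M (\<lambda>s. (f s)^2) \<Longrightarrow> integrable M (\<lambda>s. (g s)^2) \<Longrightarrow>
  integrable M (\<lambda>s. f s * g s) \<Longrightarrow> integrable M (\<lambda>s. (f s + g s :: real)^2)"
proof -
  assume a: "integrable M (\<lambda>s. (f s)^2)" "integrable M (\<lambda>s. (g s)^2)" "integrable M (\<lambda>s. f s * g s)"
  have "(\<lambda>s. (f s + g s)^2) = (\<lambda>s. (f s)^2 + (g s)^2 + 2 * (f s * g s))"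
    by (simp add: power2_sum algebra_simps)
  then show ?thesis using a by (simp add: Bochner_Integration.integrable_add)
qed

lemma int_sq_diff: "integrable M (\<lambda>s. (f s)^2) \<Longrightarrow> integrable M (\<lambda>s. (g s)^2) \<Longrightarrow>
  integrable M (\<lambda>s. f s * g s) \<Longrightarrow> integrable M (\<lambda>s. (f s - g s :: real)^2)"
proof -
  assume a: "integrable M (\<lambda>s. (f s)^2)" "integrable M (\<lambda>s. (g s)^2)" "integrable M (\<lambda>s. f s * g s)"
  have "(\<lambda>s. (f s - g s)^2) = (\<lambda>s. (f s)^2 + (g s)^2 - 2 * (f s * g s))"
    by (simp add: power2_diff algebra_simps)
  then show ?thesis using a by (simp add: Bochner_Integration.integrable_add Bochner_Integration.integrable_diff)
qed

lemma RL2_add: assumes u: "u \<in> RL2 a b m n" and v: "v \<in> RL2 a b m n"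
  shows "rl2_add u v \<in> RL2 a b m n"
proof -
  have "\<And>i. i < n \<Longrightarrow> ut a b (rl2_add u v) i = (\<lambda>s. ut a b u i s + ut a b v i s)"
    using ut_add[OF u v] by auto
  moreover have "\<And>i. i < n \<Longrightarrow> integrable lborel (\<lambda>s. (ut a b u i s + ut a b v i s)^2)"
    using RL2_prod_int[OF u v] RL2_sq[OF u] RL2_sq[OF v] by (intro int_sq_add)
  ultimately show ?thesis using u v RL2_meas[OF u] RL2_meas[OF v]
    by (auto simp: RL2_iff rl2_add_def)
qed

lemma RL2_scale: assumes u: "u \<in> RL2 a b m n"
  shows "rl2_scale c u \<in> RL2 a b m n"
proof -
  have "\<And>i. i < n \<Longrightarrow> ut a b (rl2_scale c u) i = (\<lambda>s. c * ut a b u i s)"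
    using ut_scale[OF u] by auto
  moreover have "\<And>i. i < n \<Longrightarrow> integrable lborel (\<lambda>s. (c * ut a b u i s)^2)"
    using RL2_sq[OF u] by (simp add: power_mult_distrib)
  ultimately show ?thesis using u RL2_meas[OF u]
    by (auto simp: RL2_iff rl2_scale_def)
qed

lemma RL2_sub: assumes u: "u \<in> RL2 a b m n" and v: "v \<in> RL2 a b m n"
  shows "rl2_sub u v \<in> RL2 a b m n"
proof -
  have "\<And>i. i < n \<Longrightarrow> ut a b (rl2_sub u v) i = (\<lambda>s. ut a b u i s - ut a b v i s)"
    using ut_sub[OF u v] by auto
  moreover have "\<And>i. i < n \<Longrightarrow> integrable lborel (\<lambda>s. (ut a b u i s - ut a b v i s)^2)"
    using RL2_prod_int[OF u v] RL2_sq[OF u] RL2_sq[OF v] by (intro int_sq_diff)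
  ultimately show ?thesis using u v RL2_meas[OF u] RL2_meas[OF v]
    by (auto simp: RL2_iff rl2_sub_def)
qed

lemma inner_sub_left:
  assumes u: "u \<in> RL2 a b m n" and v: "v \<in> RL2 a b m n" and w: "w \<in> RL2 a b m n"
  shows "rl2_inner a b (rl2_sub u v) w = rl2_inner a b u w - rl2_inner a b v w"
proof -
  have "(\<Sum>i<n. \<integral>s. ut a b (rl2_sub u v) i s * ut a b w i s \<partial>lborel) =
        (\<Sum>i<n. (\<integral>s. ut a b u i s * ut a b w i s \<partial>lborel) - (\<integral>s. ut a b v i s * ut a b w i s \<partial>lborel))"
  proof (rule sum.cong[OF refl])
    fix i assume "i \<in> {..<n}"
    then have i: "i < n" by simp
    have "(\<lambda>s. ut a b (rl2_sub u v) i s * ut a b w i s) = (\<lambda>s. ut a b u i s * ut a b w i s - ut a b v i s * ut a b w i s)"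
      using ut_sub[OF u v i] by (simp add: left_diff_distrib)
    then show "(\<integral>s. ut a b (rl2_sub u v) i s * ut a b w i s \<partial>lborel) =
        (\<integral>s. ut a b u i s * ut a b w i s \<partial>lborel) - (\<integral>s. ut a b v i s * ut a b w i s \<partial>lborel)"
      using RL2_prod_int[OF u w i] RL2_prod_int[OF v w i] by simp
  qed
  moreover have "(\<Sum>j<m. vec_index (fst (rl2_sub u v)) j * vec_index (fst w) j) =
     (\<Sum>j<m. vec_index (fst u) j * vec_index (fst w) j - vec_index (fst v) j * vec_index (fst w) j)"
    using fst_sub[OF u v] by (intro sum.cong) (auto simp: left_diff_distrib)
  ultimately show ?thesis
    unfolding inner_formula[OF RL2_sub[OF u v] w] inner_formula[OF u w] inner_formula[OF v w]
    by (simp add: sum_subtractf)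
qed

lemma inner_add_left:
  assumes u: "u \<in> RL2 a b m n" and v: "v \<in> RL2 a b m n" and w: "w \<in> RL2 a b m n"
  shows "rl2_inner a b (rl2_add u v) w = rl2_inner a b u w + rl2_inner a b v w"
proof -
  have "(\<Sum>i<n. \<integral>s. ut a b (rl2_add u v) i s * ut a b w i s \<partial>lborel) =
        (\<Sum>i<n. (\<integral>s. ut a b u i s * ut a b w i s \<partial>lborel) + (\<integral>s. ut a b v i s * ut a b w i s \<partial>lborel))"
  proof (rule sum.cong[OF refl])
    fix i assume "i \<in> {..<n}"
    then have i: "i < n" by simp
    have "(\<lambda>s. ut a b (rl2_add u v) i s * ut a b w i s) = (\<lambda>s. ut a b u i s * ut a b w i s + ut a b v i s * ut a b w i s)"
      using ut_add[OF u v i] by (simp add: algebra_simps)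
    then show "(\<integral>s. ut a b (rl2_add u v) i s * ut a b w i s \<partial>lborel) =
        (\<integral>s. ut a b u i s * ut a b w i s \<partial>lborel) + (\<integral>s. ut a b v i s * ut a b w i s \<partial>lborel)"
      using RL2_prod_int[OF u w i] RL2_prod_int[OF v w i] by simp
  qed
  moreover have "(\<Sum>j<m. vec_index (fst (rl2_add u v)) j * vec_index (fst w) j) =
     (\<Sum>j<m. vec_index (fst u) j * vec_index (fst w) j + vec_index (fst v) j * vec_index (fst w) j)"
    using fst_add[OF u v] by (intro sum.cong) (auto simp: algebra_simps)
  ultimately show ?thesis
    unfolding inner_formula[OF RL2_add[OF u v] w] inner_formula[OF u w] inner_formula[OF v w]
    by (simp add: sum.distrib)
qed

lemma inner_scale_left:
  assumes u: "u \<in> RL2 a b m n" and w: "w \<in> RL2 a b m n"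
  shows "rl2_inner a b (rl2_scale c u) w = c * rl2_inner a b u w"
proof -
  have "(\<Sum>i<n. \<integral>s. ut a b (rl2_scale c u) i s * ut a b w i s \<partial>lborel) =
        (\<Sum>i<n. c * (\<integral>s. ut a b u i s * ut a b w i s \<partial>lborel))"
  proof (rule sum.cong[OF refl])
    fix i assume "i \<in> {..<n}"
    then have i: "i < n" by simp
    have "(\<lambda>s. ut a b (rl2_scale c u) i s * ut a b w i s) = (\<lambda>s. c * (ut a b u i s * ut a b w i s))"
      using ut_scale[OF u i] by (simp add: algebra_simps)
    then show "(\<integral>s. ut a b (rl2_scale c u) i s * ut a b w i s \<partial>lborel) =
        c * (\<integral>s. ut a b u i s * ut a b w i s \<partial>lborel)"
      by simp
  qed
  moreover have "(\<Sum>j<m. vec_index (fst (rl2_scale c u)) j * vec_index (fst w) j) =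
     (\<Sum>j<m. c * (vec_index (fst u) j * vec_index (fst w) j))"
    using fst_scale[OF u] by (intro sum.cong) (auto simp: algebra_simps)
  ultimately show ?thesis
    unfolding inner_formula[OF RL2_scale[OF u] w] inner_formula[OF u w]
    by (simp add: sum_distrib_left[symmetric] algebra_simps)
qed

lemma inner_commute:
  assumes u: "u \<in> RL2 a b m n" and w: "w \<in> RL2 a b m n"
  shows "rl2_inner a b u w = rl2_inner a b w u"
  unfolding inner_formula[OF u w] inner_formula[OF w u] by (simp add: mult.commute)

lemma inner_self_nonneg:
  assumes u: "u \<in> RL2 a b m n"
  shows "rl2_inner a b u u \<ge> 0"
  unfolding inner_formula[OF u u]
  by (intro add_nonneg_nonneg sum_nonneg integral_nonneg_AE) auto

lemma inner_sub_right:
  assumes u: "u \<in> RL2 a b m n" and v: "v \<in> RL2 a b m n" and w: "w \<in> RL2 a b m n"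
  shows "rl2_inner a b w (rl2_sub u v) = rl2_inner a b w u - rl2_inner a b w v"
  using inner_sub_left[OF u v w] inner_commute[OF w] RL2_sub[OF u v] u v by metis

lemma inner_add_right:
  assumes u: "u \<in> RL2 a b m n" and v: "v \<in> RL2 a b m n" and w: "w \<in> RL2 a b m n"
  shows "rl2_inner a b w (rl2_add u v) = rl2_inner a b w u + rl2_inner a b w v"
  using inner_add_left[OF u v w] inner_commute[OF w] RL2_add[OF u v] u v by metis

lemma inner_scale_right:
  assumes u: "u \<in> RL2 a b m n" and w: "w \<in> RL2 a b m n"
  shows "rl2_inner a b w (rl2_scale c u) = c * rl2_inner a b w u"
  using inner_scale_left[OF u w] inner_commute[OF w] RL2_scale[OF u] u by metis

lemma norm_sq: assumes u: "u \<in> RL2 a b m n" shows "(rl2_norm a b u)^2 = rl2_inner a b u u"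
  unfolding rl2_norm_def using inner_self_nonneg[OF u] by simp

lemma sp_self_nonneg: "scalar_prod v v \<ge> (0::real)"
  unfolding scalar_prod_def by (intro sum_nonneg) auto

lemma inner_self_nonneg_any: "rl2_inner a b u u \<ge> 0"
  unfolding rl2_inner_def set_lebesgue_integral_def
  by (intro add_nonneg_nonneg sp_self_nonneg integral_nonneg_AE AE_I2)
     (simp add: sp_self_nonneg split: split_indicator)

lemma norm_nonneg: "rl2_norm a b u \<ge> 0"
  unfolding rl2_norm_def using inner_self_nonneg_any by simp

lemma quad_CS:
  fixes A B C :: real
  assumes q: "\<And>t. 0 \<le> A + 2 * t * B + t^2 * C"
  shows "B^2 \<le> A * C"
proof (cases "C = 0")
  case True
  have "B = 0"
  proof (rule ccontr)
    assume "B \<noteq> 0"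
    from q[of "-(A+1)/(2*B)"] True \<open>B \<noteq> 0\<close> show False by (simp add: field_simps)
  qed
  then show ?thesis using True by simp
next
  case False
  have C: "C > 0" using q[of 0] q[of 1] False q[of "-1"]
  proof -
    have "C \<ge> 0"
    proof (rule ccontr)
      assume "\<not> C \<ge> 0"
      then have Cn: "C < 0" by simp
      define t where "t = sqrt ((\<bar>A\<bar> + 1) / (-C))"
      have t2: "t^2 = (\<bar>A\<bar> + 1) / (-C)" unfolding t_def using Cn by (simp add: divide_nonneg_neg)
      have "t^2 * C = - (\<bar>A\<bar> + 1)" unfolding t2 using Cn by (simp add: field_simps)
      moreover have "0 \<le> A + 2 * t * B + t^2 * C" using q[of t] by simp
      moreover have "0 \<le> A - 2 * t * B + t^2 * C" using q[of "-t"] by simp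
      ultimately show False using abs_ge_self[of A] by linarith
    qed
    then show ?thesis using False by simp
  qed
  have "0 \<le> A + 2 * (-B/C) * B + (-B/C)^2 * C" by (rule q)
  also have "\<dots> = A - B^2 / C" using C by (simp add: field_simps power2_eq_square)
  finally show ?thesis using C by (simp add: field_simps)
qed

lemma inner_CS:
  assumes u: "u \<in> RL2 a b m n" and v: "v \<in> RL2 a b m n"
  shows "\<bar>rl2_inner a b u v\<bar> \<le> rl2_norm a b u * rl2_norm a b v"
proof -
  have "(rl2_inner a b u v)^2 \<le> rl2_inner a b u u * rl2_inner a b v v"
  proof (rule quad_CS)
    fix t
    have w: "rl2_add u (rl2_scale t v) \<in> RL2 a b m n" using u v by (intro RL2_add RL2_scale)
    have "0 \<le> rl2_inner a b (rl2_add u (rl2_scale t v)) (rl2_add u (rl2_scale t v))"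
      by (rule inner_self_nonneg[OF w])
    also have "\<dots> = rl2_inner a b u u + 2 * t * rl2_inner a b u v + t^2 * rl2_inner a b v v"
      using u v RL2_scale[OF v]
      by (simp add: inner_add_left inner_add_right inner_scale_left inner_scale_right w
          inner_commute[OF u v] power2_eq_square algebra_simps)
    finally show "0 \<le> rl2_inner a b u u + 2 * t * rl2_inner a b u v + t^2 * rl2_inner a b v v" .
  qed
  also have "\<dots> = (rl2_norm a b u * rl2_norm a b v)^2"
    using norm_sq[OF u] norm_sq[OF v] by (simp add: power_mult_distrib)
  finally show ?thesis
    using norm_nonneg[of a b u] norm_nonneg[of a b v]
    by (metis abs_le_square_iff abs_of_nonneg mult_nonneg_nonneg)
qed


section \<open>Matrix and polynomial basics\<close>

lemma mv_idx:
  assumes "M \<in> carrier_mat r c" "v \<in> carrier_vec c" "i < r"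
  shows "vec_index (mult_mat_vec M v) i = (\<Sum>j<c. M $$ (i,j) * vec_index v j)"
  using assms by (simp add: scalar_prod_def atLeast0LessThan)

lemma eval1_carrier: "M \<in> carrier_mat r c \<Longrightarrow> eval1 M s \<in> carrier_mat r c"
  unfolding eval1_def by simp
lemma eval1_idx: "M \<in> carrier_mat r c \<Longrightarrow> i < r \<Longrightarrow> j < c \<Longrightarrow> eval1 M s $$ (i,j) = poly (M $$ (i,j)) s"
  unfolding eval1_def by simp
lemma eval2_carrier: "M \<in> carrier_mat r c \<Longrightarrow> eval2 M s \<theta> \<in> carrier_mat r c"
  unfolding eval2_def by simp
lemma eval2_idx: "M \<in> carrier_mat r c \<Longrightarrow> i < r \<Longrightarrow> j < c \<Longrightarrow>
    eval2 M s \<theta> $$ (i,j) = poly (poly (M $$ (i,j)) [:\<theta>:]) s"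
  unfolding eval2_def by simp

lemma poly_cont: "continuous_on S (\<lambda>x. poly p (x::real))"
  by (simp add: continuous_at_imp_continuous_on poly_isCont)

lemma poly2_cont: "continuous_on UNIV (\<lambda>z::real\<times>real. poly (poly p [:snd z:]) (fst z))"
proof (induction p rule: pCons_induct)
  case 0
  then show ?case by simp
next
  case (pCons c p)
  have e: "(\<lambda>z::real\<times>real. poly (poly (pCons c p) [:snd z:]) (fst z)) =
      (\<lambda>z. poly c (fst z) + snd z * poly (poly p [:snd z:]) (fst z))"
    by (simp add: fun_eq_iff)
  have c1: "continuous_on UNIV (\<lambda>z::real\<times>real. poly c (fst z))"
    using continuous_on_compose[OF continuous_on_fst[OF continuous_on_id] poly_cont[of _ c]]
    by (simp add: o_def)
  show ?case unfolding e
    by (intro continuous_intros c1 pCons.IH)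
qed

lemma poly2_cont1: "continuous_on UNIV (\<lambda>\<theta>::real. poly (poly p [:\<theta>:]) s)"
proof -
  have "continuous_on UNIV ((\<lambda>z::real\<times>real. poly (poly p [:snd z:]) (fst z)) \<circ> (\<lambda>\<theta>. (s, \<theta>)))"
    by (intro continuous_on_compose continuous_intros) (rule continuous_on_subset[OF poly2_cont], simp)
  then show ?thesis by (simp add: o_def)
qed

lemma bound_compact:
  fixes f :: "'a::topological_space \<Rightarrow> real"
  assumes "compact S" "continuous_on S f"
  shows "\<exists>M. \<forall>x\<in>S. \<bar>f x\<bar> \<le> M"
proof -
  have "bounded (f ` S)" by (rule compact_imp_bounded[OF compact_continuous_image[OF assms(2,1)]])
  then show ?thesis unfolding bounded_iff by auto
qed

lemma fin_bound:
  fixes f :: "nat \<Rightarrow> nat \<Rightarrow> 'x \<Rightarrow> real"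
  assumes "\<And>i j. i < p \<Longrightarrow> j < q \<Longrightarrow> \<exists>M. \<forall>x\<in>S. \<bar>f i j x\<bar> \<le> M"
  shows "\<exists>M. \<forall>i<p. \<forall>j<q. \<forall>x\<in>S. \<bar>f i j x\<bar> \<le> M"
proof -
  define Mf where "Mf i j = (SOME M. \<forall>x\<in>S. \<bar>f i j x\<bar> \<le> M)" for i j
  have Mf: "\<And>i j x. i < p \<Longrightarrow> j < q \<Longrightarrow> x \<in> S \<Longrightarrow> \<bar>f i j x\<bar> \<le> Mf i j"
    unfolding Mf_def using someI_ex[OF assms] by blast
  show ?thesis
  proof (intro exI[of _ "\<Sum>i<p. \<Sum>j<q. \<bar>Mf i j\<bar>"] allI impI ballI)
    fix i j x assume ij: "i < p" "j < q" and x: "x \<in> S"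
    have "\<bar>f i j x\<bar> \<le> \<bar>Mf i j\<bar>" using Mf[OF ij x] by simp
    also have "\<dots> \<le> (\<Sum>j<q. \<bar>Mf i j\<bar>)" using ij by (intro member_le_sum) auto
    also have "\<dots> \<le> (\<Sum>i<p. \<Sum>j<q. \<bar>Mf i j\<bar>)"
      using ij by (intro member_le_sum[of i "{..<p}" "\<lambda>i. \<Sum>j<q. \<bar>Mf i j\<bar>"]) (auto intro: sum_nonneg)
    finally show "\<bar>f i j x\<bar> \<le> (\<Sum>i<p. \<Sum>j<q. \<bar>Mf i j\<bar>)" .
  qed
qed

definition pi_bounds :: "real \<Rightarrow> real \<Rightarrow> nat \<Rightarrow> nat \<Rightarrow> nat \<Rightarrow> nat \<Rightarrow> pi4 \<Rightarrow> real \<Rightarrow> bool" where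
  "pi_bounds a b m1 n1 m2 n2 D M \<longleftrightarrow> M \<ge> 0 \<and>
    (\<forall>i<m2. \<forall>j<m1. \<bar>pi_P D $$ (i,j)\<bar> \<le> M) \<and>
    (\<forall>i<m2. \<forall>j<n1. \<forall>s\<in>{a..b}. \<bar>poly (pi_Q1 D $$ (i,j)) s\<bar> \<le> M) \<and>
    (\<forall>i<n2. \<forall>j<m1. \<forall>s\<in>{a..b}. \<bar>poly (pi_Q2 D $$ (i,j)) s\<bar> \<le> M) \<and>
    (\<forall>i<n2. \<forall>j<n1. \<forall>s\<in>{a..b}. \<bar>poly (pi_R0 D $$ (i,j)) s\<bar> \<le> M) \<and>
    (\<forall>i<n2. \<forall>j<n1. \<forall>s\<in>{a..b}. \<forall>\<theta>\<in>{a..b}. \<bar>poly (poly (pi_R1 D $$ (i,j)) [:\<theta>:]) s\<bar> \<le> M) \<and>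
    (\<forall>i<n2. \<forall>j<n1. \<forall>s\<in>{a..b}. \<forall>\<theta>\<in>{a..b}. \<bar>poly (poly (pi_R2 D $$ (i,j)) [:\<theta>:]) s\<bar> \<le> M)"

lemma pi_bounds_ex: "\<exists>M. pi_bounds a b m1 n1 m2 n2 D M"
proof -
  obtain M1 where M1: "\<forall>i<m2. \<forall>j<m1. \<forall>x\<in>(UNIV::unit set). \<bar>pi_P D $$ (i,j)\<bar> \<le> M1"
    using fin_bound[of m2 m1 UNIV "\<lambda>i j x. pi_P D $$ (i,j)"] by blast
  obtain M2 where M2: "\<forall>i<m2. \<forall>j<n1. \<forall>s\<in>{a..b}. \<bar>poly (pi_Q1 D $$ (i,j)) s\<bar> \<le> M2"
    using fin_bound[of m2 n1 "{a..b}" "\<lambda>i j s. poly (pi_Q1 D $$ (i,j)) s"]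
      bound_compact[OF compact_Icc poly_cont] by blast
  obtain M3 where M3: "\<forall>i<n2. \<forall>j<m1. \<forall>s\<in>{a..b}. \<bar>poly (pi_Q2 D $$ (i,j)) s\<bar> \<le> M3"
    using fin_bound[of n2 m1 "{a..b}" "\<lambda>i j s. poly (pi_Q2 D $$ (i,j)) s"]
      bound_compact[OF compact_Icc poly_cont] by blast
  obtain M4 where M4: "\<forall>i<n2. \<forall>j<n1. \<forall>s\<in>{a..b}. \<bar>poly (pi_R0 D $$ (i,j)) s\<bar> \<le> M4"
    using fin_bound[of n2 n1 "{a..b}" "\<lambda>i j s. poly (pi_R0 D $$ (i,j)) s"]
      bound_compact[OF compact_Icc poly_cont] by blast
  have c2: "\<And>p. \<exists>M. \<forall>z\<in>{a..b}\<times>{a..b}. \<bar>poly (poly p [:snd z:]) (fst z)\<bar> \<le> M"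
    by (rule bound_compact[OF compact_Times[OF compact_Icc compact_Icc]])
       (rule continuous_on_subset[OF poly2_cont], simp)
  obtain M5 where M5: "\<forall>i<n2. \<forall>j<n1. \<forall>z\<in>{a..b}\<times>{a..b}. \<bar>poly (poly (pi_R1 D $$ (i,j)) [:snd z:]) (fst z)\<bar> \<le> M5"
    using fin_bound[of n2 n1 "{a..b}\<times>{a..b}" "\<lambda>i j z. poly (poly (pi_R1 D $$ (i,j)) [:snd z:]) (fst z)"] c2
    by blast
  obtain M6 where M6: "\<forall>i<n2. \<forall>j<n1. \<forall>z\<in>{a..b}\<times>{a..b}. \<bar>poly (poly (pi_R2 D $$ (i,j)) [:snd z:]) (fst z)\<bar> \<le> M6"
    using fin_bound[of n2 n1 "{a..b}\<times>{a..b}" "\<lambda>i j z. poly (poly (pi_R2 D $$ (i,j)) [:snd z:]) (fst z)"] c2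
    by blast
  define M where "M = \<bar>M1\<bar> + \<bar>M2\<bar> + \<bar>M3\<bar> + \<bar>M4\<bar> + \<bar>M5\<bar> + \<bar>M6\<bar>"
  have "pi_bounds a b m1 n1 m2 n2 D M"
    unfolding pi_bounds_def
  proof (intro conjI allI impI ballI)
    show "0 \<le> M" unfolding M_def by simp
  next
    fix i j assume "i < m2" "j < m1"
    then have "\<bar>pi_P D $$ (i, j)\<bar> \<le> M1" using M1 by blast
    then show "\<bar>pi_P D $$ (i, j)\<bar> \<le> M" unfolding M_def
      using abs_ge_self[of M1] abs_ge_zero[of M2] abs_ge_zero[of M3] abs_ge_zero[of M4] abs_ge_zero[of M5] abs_ge_zero[of M6] by linarith
  next
    fix i j s assume "i < m2" "j < n1" "s \<in> {a..b}"
    then have "\<bar>poly (pi_Q1 D $$ (i, j)) s\<bar> \<le> M2" using M2 by blast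
    then show "\<bar>poly (pi_Q1 D $$ (i, j)) s\<bar> \<le> M" unfolding M_def
      using abs_ge_zero[of M1] abs_ge_self[of M2] abs_ge_zero[of M3] abs_ge_zero[of M4] abs_ge_zero[of M5] abs_ge_zero[of M6] by linarith
  next
    fix i j s assume "i < n2" "j < m1" "s \<in> {a..b}"
    then have "\<bar>poly (pi_Q2 D $$ (i, j)) s\<bar> \<le> M3" using M3 by blast
    then show "\<bar>poly (pi_Q2 D $$ (i, j)) s\<bar> \<le> M" unfolding M_def
      using abs_ge_zero[of M1] abs_ge_zero[of M2] abs_ge_self[of M3] abs_ge_zero[of M4] abs_ge_zero[of M5] abs_ge_zero[of M6] by linarith
  next
    fix i j s assume "i < n2" "j < n1" "s \<in> {a..b}"
    then have "\<bar>poly (pi_R0 D $$ (i, j)) s\<bar> \<le> M4" using M4 by blast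
    then show "\<bar>poly (pi_R0 D $$ (i, j)) s\<bar> \<le> M" unfolding M_def
      using abs_ge_zero[of M1] abs_ge_zero[of M2] abs_ge_zero[of M3] abs_ge_self[of M4] abs_ge_zero[of M5] abs_ge_zero[of M6] by linarith
  next
    fix i j s \<theta> assume ij: "i < n2" "j < n1" and st: "s \<in> {a..b}" "\<theta> \<in> {a..b}"
    have "(s, \<theta>) \<in> {a..b}\<times>{a..b}" using st by simp
    then have "\<bar>poly (poly (pi_R1 D $$ (i,j)) [:\<theta>:]) s\<bar> \<le> M5" using M5 ij by fastforce
    then show "\<bar>poly (poly (pi_R1 D $$ (i,j)) [:\<theta>:]) s\<bar> \<le> M" unfolding M_def
      using abs_ge_zero[of M1] abs_ge_zero[of M2] abs_ge_zero[of M3] abs_ge_zero[of M4] abs_ge_self[of M5] abs_ge_zero[of M6] by linarith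
  next
    fix i j s \<theta> assume ij: "i < n2" "j < n1" and st: "s \<in> {a..b}" "\<theta> \<in> {a..b}"
    have "(s, \<theta>) \<in> {a..b}\<times>{a..b}" using st by simp
    then have "\<bar>poly (poly (pi_R2 D $$ (i,j)) [:\<theta>:]) s\<bar> \<le> M6" using M6 ij by fastforce
    then show "\<bar>poly (poly (pi_R2 D $$ (i,j)) [:\<theta>:]) s\<bar> \<le> M" unfolding M_def
      using abs_ge_zero[of M1] abs_ge_zero[of M2] abs_ge_zero[of M3] abs_ge_zero[of M4] abs_ge_zero[of M5] abs_ge_self[of M6] by linarith
  qed
  then show ?thesis ..
qed

section \<open>L1/L2 facts\<close>

lemma ut_out: "s \<notin> {a..b} \<Longrightarrow> ut a b u j s = 0"
  by (simp add: ut_def)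

lemma ind_int: "integrable lborel (indicator {a..b} :: real \<Rightarrow> real)"
  by (rule integrable_real_indicator) (auto simp: emeasure_lborel_Icc_eq)

lemma ind_integral: "a \<le> b \<Longrightarrow> (\<integral>s. indicator {a..b} s \<partial>lborel) = b - (a::real)"
  by simp

lemma ut_L1:
  assumes u: "u \<in> RL2 a b m n" and j: "j < n"
  shows "integrable lborel (\<lambda>s. \<bar>ut a b u j s\<bar>)"
proof (rule Bochner_Integration.integrable_bound[where f="\<lambda>s. (indicator {a..b} s + (ut a b u j s)^2) / 2"])
  show "integrable lborel (\<lambda>s. (indicator {a..b} s + (ut a b u j s)^2) / 2)"
    using ind_int[of a b] RL2_sq[OF u j] by auto
  show "(\<lambda>s. \<bar>ut a b u j s\<bar>) \<in> borel_measurable lborel" by (rule borel_measurable_abs[OF RL2_meas[OF u j]])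
  show "AE x in lborel. norm \<bar>ut a b u j x\<bar> \<le> norm ((indicator {a..b} x + (ut a b u j x)^2) / 2)"
  proof (rule AE_I2)
    fix x
    show "norm \<bar>ut a b u j x\<bar> \<le> norm ((indicator {a..b} x + (ut a b u j x)^2) / 2)"
    proof (cases "x \<in> {a..b}")
      case True
      have "0 \<le> (\<bar>ut a b u j x\<bar> - 1)^2" by simp
      then have "2 * \<bar>ut a b u j x\<bar> \<le> 1 + (ut a b u j x)^2" by (simp add: power2_diff power2_abs)
      then show ?thesis using True by simp
    next
      case False then show ?thesis by (simp add: ut_def)
    qed
  qed
qed

lemma ut_abs_ind: "\<bar>ut a b u j s\<bar> * indicator {a..b} s = \<bar>ut a b u j s\<bar>"
  by (simp add: ut_def split: split_indicator)

lemma ut_L1_bound: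
  assumes u: "u \<in> RL2 a b m n" and j: "j < n" and ab: "a < b"
  shows "(\<integral>s. \<bar>ut a b u j s\<bar> \<partial>lborel)^2 \<le> (b - a) * (\<integral>s. (ut a b u j s)^2 \<partial>lborel)"
proof -
  let ?A = "\<integral>s. (ut a b u j s)^2 \<partial>lborel"
  let ?B = "\<integral>s. \<bar>ut a b u j s\<bar> \<partial>lborel"
  have "?B^2 \<le> ?A * (b - a)"
  proof (rule quad_CS)
    fix t :: real
    have eq: "\<And>s. (\<bar>ut a b u j s\<bar> + t * indicator {a..b} s)^2 =
       (ut a b u j s)^2 + 2 * t * \<bar>ut a b u j s\<bar> + t^2 * indicator {a..b} s"
      by (simp add: ut_def power2_eq_square split: split_indicator) (simp add: algebra_simps)
    have "0 \<le> (\<integral>s. (\<bar>ut a b u j s\<bar> + t * indicator {a..b} s)^2 \<partial>lborel)" by simp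
    also have "\<dots> = (\<integral>s. (ut a b u j s)^2 + 2 * t * \<bar>ut a b u j s\<bar> + t^2 * indicator {a..b} s \<partial>lborel)"
      unfolding eq ..
    also have "\<dots> = ?A + 2 * t * ?B + t^2 * (b - a)"
      using RL2_sq[OF u j] ut_L1[OF u j] ind_int[of a b] ab by simp
    finally show "0 \<le> ?A + 2 * t * ?B + t^2 * (b - a)" .
  qed
  then show ?thesis by (simp add: mult.commute)
qed

lemma norm_parts:
  assumes u: "u \<in> RL2 a b m n"
  shows "(rl2_norm a b u)^2 = (\<Sum>j<m. (vec_index (fst u) j)^2) + (\<Sum>j<n. \<integral>s. (ut a b u j s)^2 \<partial>lborel)"
  using norm_sq[OF u] inner_formula[OF u u] by (simp add: power2_eq_square)

lemma norm_fst_bound: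
  assumes u: "u \<in> RL2 a b m n" and j: "j < m"
  shows "\<bar>vec_index (fst u) j\<bar> \<le> rl2_norm a b u"
proof -
  have "(vec_index (fst u) j)^2 \<le> (\<Sum>j<m. (vec_index (fst u) j)^2)"
    using j by (intro member_le_sum) auto
  also have "\<dots> \<le> (rl2_norm a b u)^2"
    unfolding norm_parts[OF u] by (intro add_increasing2 sum_nonneg) auto
  finally have "\<bar>vec_index (fst u) j\<bar>^2 \<le> (rl2_norm a b u)^2" by simp
  from power2_le_imp_le[OF this norm_nonneg] show ?thesis .
qed

lemma norm_L2_sum:
  assumes u: "u \<in> RL2 a b m n"
  shows "(\<Sum>j<n. \<integral>s. (ut a b u j s)^2 \<partial>lborel) \<le> (rl2_norm a b u)^2"
  unfolding norm_parts[OF u] by (intro add_increasing sum_nonneg) auto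

lemma norm_L2_bound:
  assumes u: "u \<in> RL2 a b m n" and j: "j < n"
  shows "(\<integral>s. (ut a b u j s)^2 \<partial>lborel) \<le> (rl2_norm a b u)^2"
proof -
  have "(\<integral>s. (ut a b u j s)^2 \<partial>lborel) \<le> (\<Sum>j<n. \<integral>s. (ut a b u j s)^2 \<partial>lborel)"
    using j by (intro member_le_sum) auto
  then show ?thesis using norm_L2_sum[OF u] by linarith
qed

lemma norm_L1_bound:
  assumes u: "u \<in> RL2 a b m n" and j: "j < n" and ab: "a < b"
  shows "(\<integral>s. \<bar>ut a b u j s\<bar> \<partial>lborel) \<le> sqrt (b - a) * rl2_norm a b u"
proof -
  have ba: "0 \<le> b - a" using ab by simp
  have 1: "(b - a) * (\<integral>s. (ut a b u j s)^2 \<partial>lborel) \<le> (b - a) * (rl2_norm a b u)^2"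
    by (rule mult_left_mono[OF norm_L2_bound[OF u j] ba])
  have 2: "(sqrt (b - a) * rl2_norm a b u)^2 = (b - a) * (rl2_norm a b u)^2"
    using ba by (simp add: power_mult_distrib)
  have "(\<integral>s. \<bar>ut a b u j s\<bar> \<partial>lborel)^2 \<le> (sqrt (b - a) * rl2_norm a b u)^2"
    unfolding 2 using ut_L1_bound[OF u j ab] 1 by (rule order_trans)
  moreover have "0 \<le> sqrt (b - a) * rl2_norm a b u"
    by (rule mult_nonneg_nonneg[OF real_sqrt_ge_zero[OF ba] norm_nonneg])
  ultimately show ?thesis by (rule power2_le_imp_le)
qed

lemma sum_CS:
  fixes c :: real
  shows "(c + (\<Sum>j<n. y j))^2 \<le> (real n + 1) * (c^2 + (\<Sum>j<n. (y j)^2))"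
proof -
  have "(c + (\<Sum>j<n. y j))^2 \<le> (c^2 + (\<Sum>j<n. (y j)^2)) * (real n + 1)"
  proof (rule quad_CS)
    fix t
    have e1: "(\<Sum>j<n. (y j + t)^2) = (\<Sum>j<n. (y j)^2 + (2 * t * y j + t^2))"
      by (intro sum.cong) (auto simp: power2_sum)
    have e2: "(\<Sum>j<n. (y j)^2 + (2 * t * y j + t^2)) = (\<Sum>j<n. (y j)^2) + (2 * t * (\<Sum>j<n. y j) + real n * t^2)"
      by (simp add: sum.distrib sum_distrib_left)
    have "0 \<le> (c + t)^2 + (\<Sum>j<n. (y j + t)^2)" by (intro add_nonneg_nonneg sum_nonneg) auto
    also have "\<dots> = (c^2 + (\<Sum>j<n. (y j)^2)) + 2 * t * (c + (\<Sum>j<n. y j)) + t^2 * (real n + 1)"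
      unfolding e1 e2 by (simp add: power2_sum algebra_simps)
    finally show "0 \<le> (c^2 + (\<Sum>j<n. (y j)^2)) + 2 * t * (c + (\<Sum>j<n. y j)) + t^2 * (real n + 1)" .
  qed
  then show ?thesis by (simp add: mult.commute)
qed

lemma kern_int:
  fixes f c :: "nat \<Rightarrow> real \<Rightarrow> real"
  assumes fm: "\<And>j. j < n \<Longrightarrow> f j \<in> borel_measurable lborel"
    and fi: "\<And>j. j < n \<Longrightarrow> integrable lborel (\<lambda>\<theta>. \<bar>f j \<theta>\<bar>)"
    and cm: "\<And>j. j < n \<Longrightarrow> c j \<in> borel_measurable lborel"
    and cb: "\<And>j \<theta>. j < n \<Longrightarrow> f j \<theta> \<noteq> 0 \<Longrightarrow> \<bar>c j \<theta>\<bar> \<le> M"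
  shows "integrable lborel (\<lambda>\<theta>. \<Sum>j<n. c j \<theta> * f j \<theta>)"
    and "\<bar>\<integral>\<theta>. (\<Sum>j<n. c j \<theta> * f j \<theta>) \<partial>lborel\<bar> \<le> M * (\<Sum>j<n. \<integral>\<theta>. \<bar>f j \<theta>\<bar> \<partial>lborel)"
proof -
  have pb: "\<bar>c j \<theta> * f j \<theta>\<bar> \<le> M * \<bar>f j \<theta>\<bar>" if "j < n" for j \<theta>
  proof (cases "f j \<theta> = 0")
    case True then show ?thesis using cb[OF that] by simp
  next
    case False then show ?thesis using cb[OF that False] by (simp add: abs_mult mult_right_mono)
  qed
  have ti: "integrable lborel (\<lambda>\<theta>. c j \<theta> * f j \<theta>)" if j: "j < n" for j
  proof (rule Bochner_Integration.integrable_bound[where f="\<lambda>\<theta>. M * \<bar>f j \<theta>\<bar>"])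
    show "integrable lborel (\<lambda>\<theta>. M * \<bar>f j \<theta>\<bar>)" using fi[OF j] by simp
    show "(\<lambda>\<theta>. c j \<theta> * f j \<theta>) \<in> borel_measurable lborel" using fm[OF j] cm[OF j] by measurable
    show "AE x in lborel. norm (c j x * f j x) \<le> norm (M * \<bar>f j x\<bar>)"
    proof (rule AE_I2)
      fix x
      have "\<bar>c j x * f j x\<bar> \<le> \<bar>M * \<bar>f j x\<bar>\<bar>" using pb[OF j, of x] abs_ge_self[of "M * \<bar>f j x\<bar>"] by linarith
      then show "norm (c j x * f j x) \<le> norm (M * \<bar>f j x\<bar>)" by simp
    qed
  qed
  show "integrable lborel (\<lambda>\<theta>. \<Sum>j<n. c j \<theta> * f j \<theta>)" using ti by auto
  have "\<bar>\<integral>\<theta>. (\<Sum>j<n. c j \<theta> * f j \<theta>) \<partial>lborel\<bar> = \<bar>\<Sum>j<n. \<integral>\<theta>. c j \<theta> * f j \<theta> \<partial>lborel\<bar>"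
    by (subst Bochner_Integration.integral_sum) (auto intro: ti)
  also have "\<dots> \<le> (\<Sum>j<n. \<bar>\<integral>\<theta>. c j \<theta> * f j \<theta> \<partial>lborel\<bar>)" by (rule sum_abs)
  also have "\<dots> \<le> (\<Sum>j<n. M * \<integral>\<theta>. \<bar>f j \<theta>\<bar> \<partial>lborel)"
  proof (rule sum_mono)
    fix j assume "j \<in> {..<n}"
    then have j: "j < n" by simp
    have "\<bar>\<integral>\<theta>. c j \<theta> * f j \<theta> \<partial>lborel\<bar> \<le> (\<integral>\<theta>. M * \<bar>f j \<theta>\<bar> \<partial>lborel)"
      by (rule integral_abs_bound_integral[OF ti[OF j]]) (use fi[OF j] pb[OF j] in auto)
    then show "\<bar>\<integral>\<theta>. c j \<theta> * f j \<theta> \<partial>lborel\<bar> \<le> M * \<integral>\<theta>. \<bar>f j \<theta>\<bar> \<partial>lborel" by simp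
  qed
  also have "\<dots> = M * (\<Sum>j<n. \<integral>\<theta>. \<bar>f j \<theta>\<bar> \<partial>lborel)" by (simp add: sum_distrib_left)
  finally show "\<bar>\<integral>\<theta>. (\<Sum>j<n. c j \<theta> * f j \<theta>) \<partial>lborel\<bar> \<le> M * (\<Sum>j<n. \<integral>\<theta>. \<bar>f j \<theta>\<bar> \<partial>lborel)" .
qed

lemma pi4_dims:
  assumes "is_pi4 m1 n1 m2 n2 D"
  shows "pi_P D \<in> carrier_mat m2 m1" "pi_Q1 D \<in> carrier_mat m2 n1" "pi_Q2 D \<in> carrier_mat n2 m1"
    "pi_R0 D \<in> carrier_mat n2 n1" "pi_R1 D \<in> carrier_mat n2 n1" "pi_R2 D \<in> carrier_mat n2 n1"
  using assms unfolding is_pi4_def by auto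

lemma pi_fst:
  assumes D: "is_pi4 m1 n1 m2 n2 D" and u: "u \<in> RL2 a b m1 n1" and i: "i < m2"
  shows "vec_index (fst (pi_op a b D u)) i = (\<Sum>j<m1. pi_P D $$ (i,j) * vec_index (fst u) j) +
     (\<integral>\<theta>. (\<Sum>j<n1. poly (pi_Q1 D $$ (i,j)) \<theta> * ut a b u j \<theta>) \<partial>lborel)"
proof -
  note dims = pi4_dims[OF D]
  have 1: "vec_index (mult_mat_vec (pi_P D) (fst u)) i = (\<Sum>j<m1. pi_P D $$ (i,j) * vec_index (fst u) j)"
    by (rule mv_idx[OF dims(1) RL2_fst[OF u] i])
  have 2: "(LINT \<theta>:{a..b}|lborel. vec_index (mult_mat_vec (eval1 (pi_Q1 D) \<theta>) (snd u \<theta>)) i) =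
     (\<integral>\<theta>. (\<Sum>j<n1. poly (pi_Q1 D $$ (i,j)) \<theta> * ut a b u j \<theta>) \<partial>lborel)"
    unfolding set_lebesgue_integral_def
  proof (rule Bochner_Integration.integral_cong[OF refl])
    fix \<theta>
    show "indicator {a..b} \<theta> *\<^sub>R vec_index (mult_mat_vec (eval1 (pi_Q1 D) \<theta>) (snd u \<theta>)) i =
        (\<Sum>j<n1. poly (pi_Q1 D $$ (i,j)) \<theta> * ut a b u j \<theta>)"
    proof (cases "\<theta> \<in> {a..b}")
      case True
      then show ?thesis
        using mv_idx[OF eval1_carrier[OF dims(2)] RL2_snd[OF u True] i] eval1_idx[OF dims(2) i]
        by (simp add: ut_def)
    next
      case False then show ?thesis by (simp add: ut_def)
    qed
  qed
  show ?thesis unfolding pi_op_def using dims(1) i 1 2 by simp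
qed

lemma pi_snd:
  assumes D: "is_pi4 m1 n1 m2 n2 D" and u: "u \<in> RL2 a b m1 n1" and i: "i < n2" and s: "s \<in> {a..b}"
  shows "vec_index (snd (pi_op a b D u) s) i =
     (\<Sum>j<m1. poly (pi_Q2 D $$ (i,j)) s * vec_index (fst u) j) +
     (\<Sum>j<n1. poly (pi_R0 D $$ (i,j)) s * ut a b u j s) +
     (\<integral>\<theta>. (\<Sum>j<n1. (indicator {a..s} \<theta> * poly (poly (pi_R1 D $$ (i,j)) [:\<theta>:]) s) * ut a b u j \<theta>) \<partial>lborel) +
     (\<integral>\<theta>. (\<Sum>j<n1. (indicator {s..b} \<theta> * poly (poly (pi_R2 D $$ (i,j)) [:\<theta>:]) s) * ut a b u j \<theta>) \<partial>lborel)"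
proof -
  note dims = pi4_dims[OF D]
  have 1: "vec_index (mult_mat_vec (eval1 (pi_Q2 D) s) (fst u)) i = (\<Sum>j<m1. poly (pi_Q2 D $$ (i,j)) s * vec_index (fst u) j)"
    using mv_idx[OF eval1_carrier[OF dims(3)] RL2_fst[OF u] i] eval1_idx[OF dims(3) i] by simp
  have 2: "vec_index (mult_mat_vec (eval1 (pi_R0 D) s) (snd u s)) i = (\<Sum>j<n1. poly (pi_R0 D $$ (i,j)) s * ut a b u j s)"
    using mv_idx[OF eval1_carrier[OF dims(4)] RL2_snd[OF u s] i] eval1_idx[OF dims(4) i] s by (simp add: ut_def)
  have 3: "(LINT \<theta>:{a..s}|lborel. vec_index (mult_mat_vec (eval2 (pi_R1 D) s \<theta>) (snd u \<theta>)) i) =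
     (\<integral>\<theta>. (\<Sum>j<n1. (indicator {a..s} \<theta> * poly (poly (pi_R1 D $$ (i,j)) [:\<theta>:]) s) * ut a b u j \<theta>) \<partial>lborel)"
    unfolding set_lebesgue_integral_def
  proof (rule Bochner_Integration.integral_cong[OF refl])
    fix \<theta>
    show "indicator {a..s} \<theta> *\<^sub>R vec_index (mult_mat_vec (eval2 (pi_R1 D) s \<theta>) (snd u \<theta>)) i =
        (\<Sum>j<n1. (indicator {a..s} \<theta> * poly (poly (pi_R1 D $$ (i,j)) [:\<theta>:]) s) * ut a b u j \<theta>)"
    proof (cases "\<theta> \<in> {a..s}")
      case True
      then have t: "\<theta> \<in> {a..b}" using s by auto
      show ?thesis
        using mv_idx[OF eval2_carrier[OF dims(5)] RL2_snd[OF u t] i] eval2_idx[OF dims(5) i] True t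
        by (simp add: ut_def)
    next
      case False then show ?thesis by simp
    qed
  qed
  have 4: "(LINT \<theta>:{s..b}|lborel. vec_index (mult_mat_vec (eval2 (pi_R2 D) s \<theta>) (snd u \<theta>)) i) =
     (\<integral>\<theta>. (\<Sum>j<n1. (indicator {s..b} \<theta> * poly (poly (pi_R2 D $$ (i,j)) [:\<theta>:]) s) * ut a b u j \<theta>) \<partial>lborel)"
    unfolding set_lebesgue_integral_def
  proof (rule Bochner_Integration.integral_cong[OF refl])
    fix \<theta>
    show "indicator {s..b} \<theta> *\<^sub>R vec_index (mult_mat_vec (eval2 (pi_R2 D) s \<theta>) (snd u \<theta>)) i =
        (\<Sum>j<n1. (indicator {s..b} \<theta> * poly (poly (pi_R2 D $$ (i,j)) [:\<theta>:]) s) * ut a b u j \<theta>)"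
    proof (cases "\<theta> \<in> {s..b}")
      case True
      then have t: "\<theta> \<in> {a..b}" using s by auto
      show ?thesis
        using mv_idx[OF eval2_carrier[OF dims(6)] RL2_snd[OF u t] i] eval2_idx[OF dims(6) i] True t
        by (simp add: ut_def)
    next
      case False then show ?thesis by simp
    qed
  qed
  show ?thesis unfolding pi_op_def using dims(4) i 1 2 3 4 by simp
qed

section \<open>Measurability\<close>

lemma poly_meas: "(\<lambda>s. poly p s :: real) \<in> borel_measurable lborel"
  using borel_measurable_continuous_onI[OF poly_cont[of UNIV p]] by (simp add: measurable_lborel1)

lemma poly2_meas1: "(\<lambda>\<theta>. poly (poly p [:\<theta>:]) s :: real) \<in> borel_measurable lborel"
  using borel_measurable_continuous_onI[OF poly2_cont1[of p s]] by (simp add: measurable_lborel1)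

lemma poly2_meas2: "(\<lambda>z::real\<times>real. poly (poly p [:snd z:]) (fst z)) \<in> borel_measurable (lborel \<Otimes>\<^sub>M lborel)"
  using borel_measurable_continuous_onI[OF poly2_cont[of p]] by (simp add: lborel_prod measurable_lborel1)

lemma closed_ind_meas:
  assumes "closed (C :: (real \<times> real) set)"
  shows "(indicator C :: real \<times> real \<Rightarrow> real) \<in> borel_measurable (lborel \<Otimes>\<^sub>M lborel)"
proof -
  have "C \<in> sets borel" by (rule borel_closed[OF assms])
  then have "indicator C \<in> (borel_measurable borel :: (real \<times> real \<Rightarrow> real) set)"
    by (rule borel_measurable_indicator)
  then show ?thesis by (simp add: lborel_prod measurable_lborel1)
qed

lemma closed_C1: "closed {z::real\<times>real. a \<le> snd z \<and> snd z \<le> fst z}"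
  by (intro closed_Collect_conj closed_Collect_le continuous_intros)
lemma closed_C2: "closed {z::real\<times>real. fst z \<le> snd z \<and> snd z \<le> b}"
  by (intro closed_Collect_conj closed_Collect_le continuous_intros)

lemma ind_C1: "indicator {a..s} \<theta> = (indicator {z::real\<times>real. a \<le> snd z \<and> snd z \<le> fst z} (s, \<theta>) :: real)"
  by (simp split: split_indicator)
lemma ind_C2: "indicator {s..b} \<theta> = (indicator {z::real\<times>real. fst z \<le> snd z \<and> snd z \<le> b} (s, \<theta>) :: real)"
  by (simp split: split_indicator)

lemma kernel_int_meas:
  fixes f :: "nat \<Rightarrow> real \<Rightarrow> real" and p :: "nat \<Rightarrow> real poly poly"
  assumes C: "closed C" and f: "\<And>j. j < n \<Longrightarrow> f j \<in> borel_measurable lborel"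
  shows "(\<lambda>s. \<integral>\<theta>. (\<Sum>j<n. (indicator C (s, \<theta>) * poly (poly (p j) [:\<theta>:]) s) * f j \<theta>) \<partial>lborel)
     \<in> borel_measurable lborel"
proof -
  have "(\<lambda>z::real\<times>real. \<Sum>j<n. (indicator C z * poly (poly (p j) [:snd z:]) (fst z)) * f j (snd z))
     \<in> borel_measurable (lborel \<Otimes>\<^sub>M lborel)"
  proof (intro borel_measurable_sum borel_measurable_times)
    fix j assume "j \<in> {..<n}"
    then have j: "j < n" by simp
    show "(indicator C :: real \<times> real \<Rightarrow> real) \<in> borel_measurable (lborel \<Otimes>\<^sub>M lborel)"
      by (rule closed_ind_meas[OF C])
    show "(\<lambda>z::real\<times>real. poly (poly (p j) [:snd z:]) (fst z)) \<in> borel_measurable (lborel \<Otimes>\<^sub>M lborel)"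
      by (rule poly2_meas2)
    show "(\<lambda>z::real\<times>real. f j (snd z)) \<in> borel_measurable (lborel \<Otimes>\<^sub>M lborel)"
      using measurable_compose[OF measurable_snd[of lborel lborel] f[OF j]] by (simp add: o_def)
  qed
  then have "(\<lambda>(s, \<theta>). \<Sum>j<n. (indicator C (s, \<theta>) * poly (poly (p j) [:\<theta>:]) s) * f j \<theta>)
     \<in> borel_measurable (lborel \<Otimes>\<^sub>M lborel)"
    by (simp add: case_prod_beta')
  then show ?thesis by (rule lborel.borel_measurable_lebesgue_integral)
qed

section \<open>Bounds\<close>

lemma sq_meas: "g \<in> borel_measurable M \<Longrightarrow> (\<lambda>s. (g s)^2 :: real) \<in> borel_measurable M"
  by measurable

lemma abs_sum_bound:
  fixes c y :: "nat \<Rightarrow> real"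
  assumes "\<And>j. j < n \<Longrightarrow> \<bar>c j\<bar> \<le> M"
  shows "\<bar>\<Sum>j<n. c j * y j\<bar> \<le> (\<Sum>j<n. M * \<bar>y j\<bar>)"
proof -
  have "\<bar>\<Sum>j<n. c j * y j\<bar> \<le> (\<Sum>j<n. \<bar>c j * y j\<bar>)" by (rule sum_abs)
  also have "\<dots> \<le> (\<Sum>j<n. M * \<bar>y j\<bar>)"
  proof (rule sum_mono)
    fix j assume "j \<in> {..<n}"
    then have "\<bar>c j\<bar> \<le> M" using assms by simp
    then show "\<bar>c j * y j\<bar> \<le> M * \<bar>y j\<bar>" by (simp add: abs_mult mult_right_mono)
  qed
  finally show ?thesis .
qed

lemma ind_kernel_bound:
  assumes "x \<noteq> 0 \<Longrightarrow> \<bar>k\<bar> \<le> M" "M \<ge> 0"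
  shows "\<bar>indicator S \<theta> * (k::real)\<bar> \<le> M \<or> x = (0::real)"
  using assms by (cases "\<theta> \<in> S") auto

lemma pi_snd_props:
  assumes D: "is_pi4 m1 n1 m2 n2 D" and u: "u \<in> RL2 a b m1 n1" and Mb: "pi_bounds a b m1 n1 m2 n2 D M"
    and i: "i < n2" and ab: "a < b"
  defines "c1 \<equiv> M * (\<Sum>j<m1. \<bar>vec_index (fst u) j\<bar>) + 2 * M * (\<Sum>j<n1. \<integral>\<theta>. \<bar>ut a b u j \<theta>\<bar> \<partial>lborel)"
  shows "ut a b (pi_op a b D u) i \<in> borel_measurable lborel"
    and "integrable lborel (\<lambda>s. (ut a b (pi_op a b D u) i s)^2)"
    and "(\<integral>s. (ut a b (pi_op a b D u) i s)^2 \<partial>lborel) \<le>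
         (real n1 + 1) * ((b - a) * c1^2 + M^2 * (\<Sum>j<n1. \<integral>s. (ut a b u j s)^2 \<partial>lborel))"
proof -
  define f where "f j = ut a b u j" for j
  define x where "x j = vec_index (fst u) j" for j
  define A where "A s = (\<Sum>j<m1. poly (pi_Q2 D $$ (i,j)) s * x j)" for s
  define B where "B s = (\<Sum>j<n1. poly (pi_R0 D $$ (i,j)) s * f j s)" for s
  define I1 where "I1 s = (\<integral>\<theta>. (\<Sum>j<n1. (indicator {a..s} \<theta> * poly (poly (pi_R1 D $$ (i,j)) [:\<theta>:]) s) * f j \<theta>) \<partial>lborel)" for s
  define I2 where "I2 s = (\<integral>\<theta>. (\<Sum>j<n1. (indicator {s..b} \<theta> * poly (poly (pi_R2 D $$ (i,j)) [:\<theta>:]) s) * f j \<theta>) \<partial>lborel)" for s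
  define G where "G s = A s + B s + I1 s + I2 s" for s
  have M0: "M \<ge> 0" using Mb unfolding pi_bounds_def by simp
  have fm: "\<And>j. j < n1 \<Longrightarrow> f j \<in> borel_measurable lborel" unfolding f_def by (rule RL2_meas[OF u])
  have fi: "\<And>j. j < n1 \<Longrightarrow> integrable lborel (\<lambda>\<theta>. \<bar>f j \<theta>\<bar>)" unfolding f_def by (rule ut_L1[OF u])
  have fsq: "\<And>j. j < n1 \<Longrightarrow> integrable lborel (\<lambda>\<theta>. (f j \<theta>)^2)" unfolding f_def by (rule RL2_sq[OF u])
  have fout: "\<And>j \<theta>. f j \<theta> \<noteq> 0 \<Longrightarrow> \<theta> \<in> {a..b}" unfolding f_def using ut_out by blast
  have uteq: "ut a b (pi_op a b D u) i = (\<lambda>s. indicator {a..b} s * G s)"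
  proof
    fix s
    show "ut a b (pi_op a b D u) i s = indicator {a..b} s * G s"
    proof (cases "s \<in> {a..b}")
      case True
      have "ut a b (pi_op a b D u) i s = indicator {a..b} s * vec_index (snd (pi_op a b D u) s) i"
        by (simp add: ut_def)
      also have "\<dots> = indicator {a..b} s * G s"
        unfolding pi_snd[OF D u i True] G_def A_def B_def I1_def I2_def f_def x_def by (simp add: add.assoc)
      finally show ?thesis .
    next
      case False then show ?thesis by (simp add: ut_def)
    qed
  qed
  have Ameas: "A \<in> borel_measurable lborel" unfolding A_def
    by (intro borel_measurable_sum borel_measurable_times poly_meas borel_measurable_const)
  have Bmeas: "B \<in> borel_measurable lborel" unfolding B_def
    by (intro borel_measurable_sum borel_measurable_times poly_meas) (use fm in blast)
  have I1meas: "I1 \<in> borel_measurable lborel"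
    unfolding I1_def ind_C1 by (rule kernel_int_meas[OF closed_C1 fm])
  have I2meas: "I2 \<in> borel_measurable lborel"
    unfolding I2_def ind_C2 by (rule kernel_int_meas[OF closed_C2 fm])
  have Gmeas: "G \<in> borel_measurable lborel" unfolding G_def
    using Ameas Bmeas I1meas I2meas by measurable
  show meas: "ut a b (pi_op a b D u) i \<in> borel_measurable lborel"
    unfolding uteq using Gmeas by measurable
  have L1sum: "(\<Sum>j<n1. \<integral>\<theta>. \<bar>f j \<theta>\<bar> \<partial>lborel) \<ge> 0" by (intro sum_nonneg) auto
  have Gb: "\<bar>G s\<bar> \<le> c1 + (\<Sum>j<n1. M * \<bar>f j s\<bar>)" if s: "s \<in> {a..b}" for s
  proof -
    have "\<bar>A s\<bar> \<le> (\<Sum>j<m1. M * \<bar>x j\<bar>)" unfolding A_def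
      by (rule abs_sum_bound) (use Mb s i in \<open>auto simp: pi_bounds_def\<close>)
    also have "\<dots> = M * (\<Sum>j<m1. \<bar>x j\<bar>)" by (simp add: sum_distrib_left)
    finally have a1: "\<bar>A s\<bar> \<le> M * (\<Sum>j<m1. \<bar>x j\<bar>)" .
    have b1: "\<bar>B s\<bar> \<le> (\<Sum>j<n1. M * \<bar>f j s\<bar>)" unfolding B_def
      by (rule abs_sum_bound) (use Mb s i in \<open>auto simp: pi_bounds_def\<close>)
    have i1: "\<bar>I1 s\<bar> \<le> M * (\<Sum>j<n1. \<integral>\<theta>. \<bar>f j \<theta>\<bar> \<partial>lborel)" unfolding I1_def
    proof (rule kern_int(2)[OF fm fi])
      fix j assume j: "j < n1"
      show "(\<lambda>\<theta>. indicator {a..s} \<theta> * poly (poly (pi_R1 D $$ (i, j)) [:\<theta>:]) s) \<in> borel_measurable lborel"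
        by (intro borel_measurable_times borel_measurable_indicator poly2_meas1) simp
    next
      fix j \<theta> assume j: "j < n1" and nz: "f j \<theta> \<noteq> 0"
      then have t: "\<theta> \<in> {a..b}" using fout by blast
      have "\<bar>poly (poly (pi_R1 D $$ (i, j)) [:\<theta>:]) s\<bar> \<le> M" using Mb i j s t unfolding pi_bounds_def by blast
      then show "\<bar>indicator {a..s} \<theta> * poly (poly (pi_R1 D $$ (i, j)) [:\<theta>:]) s\<bar> \<le> M"
        using M0 by (cases "\<theta> \<in> {a..s}") auto
    qed
    have i2: "\<bar>I2 s\<bar> \<le> M * (\<Sum>j<n1. \<integral>\<theta>. \<bar>f j \<theta>\<bar> \<partial>lborel)" unfolding I2_def
    proof (rule kern_int(2)[OF fm fi])
      fix j assume j: "j < n1"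
      show "(\<lambda>\<theta>. indicator {s..b} \<theta> * poly (poly (pi_R2 D $$ (i, j)) [:\<theta>:]) s) \<in> borel_measurable lborel"
        by (intro borel_measurable_times borel_measurable_indicator poly2_meas1) simp
    next
      fix j \<theta> assume j: "j < n1" and nz: "f j \<theta> \<noteq> 0"
      then have t: "\<theta> \<in> {a..b}" using fout by blast
      have "\<bar>poly (poly (pi_R2 D $$ (i, j)) [:\<theta>:]) s\<bar> \<le> M" using Mb i j s t unfolding pi_bounds_def by blast
      then show "\<bar>indicator {s..b} \<theta> * poly (poly (pi_R2 D $$ (i, j)) [:\<theta>:]) s\<bar> \<le> M"
        using M0 by (cases "\<theta> \<in> {s..b}") auto
    qed
    have "\<bar>G s\<bar> \<le> \<bar>A s\<bar> + \<bar>B s\<bar> + \<bar>I1 s\<bar> + \<bar>I2 s\<bar>" unfolding G_def by linarith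
    also have "\<dots> \<le> c1 + (\<Sum>j<n1. M * \<bar>f j s\<bar>)"
      using a1 b1 i1 i2 unfolding c1_def x_def f_def by linarith
    finally show ?thesis .
  qed
  define R where "R s = (real n1 + 1) * (indicator {a..b} s * c1^2 + M^2 * (\<Sum>j<n1. (f j s)^2))" for s
  have R0: "R s \<ge> 0" for s unfolding R_def by (intro mult_nonneg_nonneg add_nonneg_nonneg sum_nonneg) auto
  have c10: "c1 \<ge> 0" unfolding c1_def using M0 L1sum unfolding f_def
    by (intro add_nonneg_nonneg mult_nonneg_nonneg sum_nonneg) auto
  have sqb: "(ut a b (pi_op a b D u) i s)^2 \<le> R s" for s
  proof (cases "s \<in> {a..b}")
    case True
    have "(ut a b (pi_op a b D u) i s)^2 = \<bar>G s\<bar>^2" unfolding uteq using True by simp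
    also have "\<dots> \<le> (c1 + (\<Sum>j<n1. M * \<bar>f j s\<bar>))^2"
      by (rule power_mono[OF Gb[OF True] abs_ge_zero])
    also have "\<dots> \<le> (real n1 + 1) * (c1^2 + (\<Sum>j<n1. (M * \<bar>f j s\<bar>)^2))" by (rule sum_CS)
    also have "\<dots> = R s" unfolding R_def using True
      by (simp add: power_mult_distrib sum_distrib_left)
    finally show ?thesis .
  next
    case False then show ?thesis using R0[of s] unfolding uteq by simp
  qed
  have Rint: "integrable lborel R" unfolding R_def
    using ind_int[of a b] fsq by (intro integrable_mult_right Bochner_Integration.integrable_add integrable_sum) auto
  show int: "integrable lborel (\<lambda>s. (ut a b (pi_op a b D u) i s)^2)"
  proof (rule Bochner_Integration.integrable_bound[OF Rint sq_meas[OF meas]])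
    show "AE x in lborel. norm ((ut a b (pi_op a b D u) i x)^2) \<le> norm (R x)"
      using sqb R0 by (intro AE_I2) simp
  qed
  have "(\<integral>s. (ut a b (pi_op a b D u) i s)^2 \<partial>lborel) \<le> (\<integral>s. R s \<partial>lborel)"
    by (rule integral_mono'[OF Rint sqb R0])
  also have "(\<integral>s. R s \<partial>lborel) = (real n1 + 1) * ((b - a) * c1^2 + M^2 * (\<Sum>j<n1. \<integral>s. (f j s)^2 \<partial>lborel))"
  proof -
    have "(\<integral>s. R s \<partial>lborel) = (real n1 + 1) * (\<integral>s. indicator {a..b} s * c1^2 + M^2 * (\<Sum>j<n1. (f j s)^2) \<partial>lborel)"
      unfolding R_def by simp
    also have "(\<integral>s. indicator {a..b} s * c1^2 + M^2 * (\<Sum>j<n1. (f j s)^2) \<partial>lborel) =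
        (\<integral>s. indicator {a..b} s * c1^2 \<partial>lborel) + (\<integral>s. M^2 * (\<Sum>j<n1. (f j s)^2) \<partial>lborel)"
      using ind_int[of a b] fsq by (intro Bochner_Integration.integral_add integrable_mult_right integrable_sum) auto
    also have "(\<integral>s. indicator {a..b} s * c1^2 \<partial>lborel) = (b - a) * c1^2"
      using ab by simp
    also have "(\<integral>s. M^2 * (\<Sum>j<n1. (f j s)^2) \<partial>lborel) = M^2 * (\<Sum>j<n1. \<integral>s. (f j s)^2 \<partial>lborel)"
      using fsq by (simp add: Bochner_Integration.integral_sum)
    finally show ?thesis .
  qed
  finally show "(\<integral>s. (ut a b (pi_op a b D u) i s)^2 \<partial>lborel) \<le>
         (real n1 + 1) * ((b - a) * c1^2 + M^2 * (\<Sum>j<n1. \<integral>s. (ut a b u j s)^2 \<partial>lborel))"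
    unfolding f_def .
qed

lemma pi_fst_bound:
  assumes D: "is_pi4 m1 n1 m2 n2 D" and u: "u \<in> RL2 a b m1 n1" and Mb: "pi_bounds a b m1 n1 m2 n2 D M"
    and i: "i < m2"
  shows "\<bar>vec_index (fst (pi_op a b D u)) i\<bar> \<le>
     M * (\<Sum>j<m1. \<bar>vec_index (fst u) j\<bar>) + 2 * M * (\<Sum>j<n1. \<integral>\<theta>. \<bar>ut a b u j \<theta>\<bar> \<partial>lborel)"
proof -
  have M0: "M \<ge> 0" using Mb unfolding pi_bounds_def by simp
  have "\<bar>\<Sum>j<m1. pi_P D $$ (i,j) * vec_index (fst u) j\<bar> \<le> (\<Sum>j<m1. M * \<bar>vec_index (fst u) j\<bar>)"
    by (rule abs_sum_bound) (use Mb i in \<open>auto simp: pi_bounds_def\<close>)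
  also have "\<dots> = M * (\<Sum>j<m1. \<bar>vec_index (fst u) j\<bar>)" by (simp add: sum_distrib_left)
  finally have a1: "\<bar>\<Sum>j<m1. pi_P D $$ (i,j) * vec_index (fst u) j\<bar> \<le> M * (\<Sum>j<m1. \<bar>vec_index (fst u) j\<bar>)" .
  have a2: "\<bar>\<integral>\<theta>. (\<Sum>j<n1. poly (pi_Q1 D $$ (i,j)) \<theta> * ut a b u j \<theta>) \<partial>lborel\<bar> \<le>
      M * (\<Sum>j<n1. \<integral>\<theta>. \<bar>ut a b u j \<theta>\<bar> \<partial>lborel)"
  proof (rule kern_int(2))
    fix j assume j: "j < n1"
    show "ut a b u j \<in> borel_measurable lborel" by (rule RL2_meas[OF u j])
    show "integrable lborel (\<lambda>\<theta>. \<bar>ut a b u j \<theta>\<bar>)" by (rule ut_L1[OF u j])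
    show "(\<lambda>\<theta>. poly (pi_Q1 D $$ (i,j)) \<theta>) \<in> borel_measurable lborel" by (rule poly_meas)
  next
    fix j \<theta> assume j: "j < n1" and nz: "ut a b u j \<theta> \<noteq> 0"
    then have t: "\<theta> \<in> {a..b}" using ut_out by blast
    show "\<bar>poly (pi_Q1 D $$ (i,j)) \<theta>\<bar> \<le> M" using Mb i j t unfolding pi_bounds_def by blast
  qed
  have L1sum: "(\<Sum>j<n1. \<integral>\<theta>. \<bar>ut a b u j \<theta>\<bar> \<partial>lborel) \<ge> 0" by (intro sum_nonneg) auto
  have "M * (\<Sum>j<n1. \<integral>\<theta>. \<bar>ut a b u j \<theta>\<bar> \<partial>lborel) \<ge> 0" using M0 L1sum by simp
  then show ?thesis unfolding pi_fst[OF D u i] using a1 a2 by linarith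
qed

lemma c1_bound:
  assumes u: "u \<in> RL2 a b m1 n1" and ab: "a < b" and M0: "M \<ge> 0"
  shows "M * (\<Sum>j<m1. \<bar>vec_index (fst u) j\<bar>) + 2 * M * (\<Sum>j<n1. \<integral>\<theta>. \<bar>ut a b u j \<theta>\<bar> \<partial>lborel)
     \<le> (M * real m1 + 2 * M * real n1 * sqrt (b - a)) * rl2_norm a b u"
proof -
  have "(\<Sum>j<m1. \<bar>vec_index (fst u) j\<bar>) \<le> (\<Sum>j<m1. rl2_norm a b u)"
    by (rule sum_mono) (use norm_fst_bound[OF u] in auto)
  then have 1: "(\<Sum>j<m1. \<bar>vec_index (fst u) j\<bar>) \<le> real m1 * rl2_norm a b u" by simp
  have "(\<Sum>j<n1. \<integral>\<theta>. \<bar>ut a b u j \<theta>\<bar> \<partial>lborel) \<le> (\<Sum>j<n1. sqrt (b - a) * rl2_norm a b u)"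
    by (rule sum_mono) (use norm_L1_bound[OF u _ ab] in auto)
  then have 2: "(\<Sum>j<n1. \<integral>\<theta>. \<bar>ut a b u j \<theta>\<bar> \<partial>lborel) \<le> real n1 * (sqrt (b - a) * rl2_norm a b u)" by simp
  have "M * (\<Sum>j<m1. \<bar>vec_index (fst u) j\<bar>) \<le> M * (real m1 * rl2_norm a b u)"
    by (rule mult_left_mono[OF 1 M0])
  moreover have "2 * M * (\<Sum>j<n1. \<integral>\<theta>. \<bar>ut a b u j \<theta>\<bar> \<partial>lborel) \<le> 2 * M * (real n1 * (sqrt (b - a) * rl2_norm a b u))"
    by (rule mult_left_mono[OF 2]) (use M0 in simp)
  ultimately show ?thesis by (simp add: algebra_simps)
qed

lemma pi_op_RL2:
  assumes D: "is_pi4 m1 n1 m2 n2 D" and ab: "a < b" and u: "u \<in> RL2 a b m1 n1"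
  shows "pi_op a b D u \<in> RL2 a b m2 n2"
proof -
  obtain M where Mb: "pi_bounds a b m1 n1 m2 n2 D M" using pi_bounds_ex by blast
  note dims = pi4_dims[OF D]
  have 1: "fst (pi_op a b D u) \<in> carrier_vec m2" using dims(1) unfolding pi_op_def by simp
  have 2: "\<forall>s\<in>{a..b}. snd (pi_op a b D u) s \<in> carrier_vec n2" using dims(4) unfolding pi_op_def by simp
  show ?thesis unfolding RL2_iff
    using 1 2 pi_snd_props(1,2)[OF D u Mb _ ab] by blast
qed

lemma pi_op_bound:
  assumes D: "is_pi4 m1 n1 m2 n2 D" and ab: "a < b"
  shows "\<exists>K. \<forall>u\<in>RL2 a b m1 n1. rl2_norm a b (pi_op a b D u) \<le> K * rl2_norm a b u"
proof -
  obtain M where Mb: "pi_bounds a b m1 n1 m2 n2 D M" using pi_bounds_ex by blast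
  have M0: "M \<ge> 0" using Mb unfolding pi_bounds_def by simp
  define C where "C = M * real m1 + 2 * M * real n1 * sqrt (b - a)"
  define K0 where "K0 = real m2 * C^2 + real n2 * ((real n1 + 1) * ((b - a) * C^2 + M^2))"
  show ?thesis
  proof (intro exI[of _ "sqrt K0"] ballI)
    fix u assume u: "u \<in> RL2 a b m1 n1"
    define N where "N = rl2_norm a b u"
    define c1 where "c1 = M * (\<Sum>j<m1. \<bar>vec_index (fst u) j\<bar>) + 2 * M * (\<Sum>j<n1. \<integral>\<theta>. \<bar>ut a b u j \<theta>\<bar> \<partial>lborel)"
    have N0: "N \<ge> 0" unfolding N_def by (rule norm_nonneg)
    have c10: "c1 \<ge> 0" unfolding c1_def using M0
      by (intro add_nonneg_nonneg mult_nonneg_nonneg sum_nonneg) auto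
    have c1C: "c1 \<le> C * N" unfolding c1_def C_def N_def by (rule c1_bound[OF u ab M0])
    have c1sq: "c1^2 \<le> C^2 * N^2"
      using power_mono[OF c1C c10] by (simp add: power_mult_distrib)
    have pu: "pi_op a b D u \<in> RL2 a b m2 n2" by (rule pi_op_RL2[OF D ab u])
    have L2: "(\<Sum>j<n1. \<integral>s. (ut a b u j s)^2 \<partial>lborel) \<le> N^2" unfolding N_def by (rule norm_L2_sum[OF u])
    have f1: "(\<Sum>i<m2. (vec_index (fst (pi_op a b D u)) i)^2) \<le> real m2 * (C^2 * N^2)"
    proof -
      have "(\<Sum>i<m2. (vec_index (fst (pi_op a b D u)) i)^2) \<le> (\<Sum>i<m2. C^2 * N^2)"
      proof (rule sum_mono)
        fix i assume "i \<in> {..<m2}"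
        then have i: "i < m2" by simp
        have "\<bar>vec_index (fst (pi_op a b D u)) i\<bar> \<le> c1" unfolding c1_def by (rule pi_fst_bound[OF D u Mb i])
        then have "\<bar>vec_index (fst (pi_op a b D u)) i\<bar>^2 \<le> c1^2" by (rule power_mono) simp
        then show "(vec_index (fst (pi_op a b D u)) i)^2 \<le> C^2 * N^2" using c1sq by simp
      qed
      then show ?thesis by simp
    qed
    have f2: "(\<Sum>i<n2. \<integral>s. (ut a b (pi_op a b D u) i s)^2 \<partial>lborel) \<le>
        real n2 * ((real n1 + 1) * ((b - a) * C^2 + M^2) * N^2)"
    proof -
      have "(\<Sum>i<n2. \<integral>s. (ut a b (pi_op a b D u) i s)^2 \<partial>lborel) \<le>
          (\<Sum>i<n2. (real n1 + 1) * ((b - a) * C^2 + M^2) * N^2)"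
      proof (rule sum_mono)
        fix i assume "i \<in> {..<n2}"
        then have i: "i < n2" by simp
        have "(\<integral>s. (ut a b (pi_op a b D u) i s)^2 \<partial>lborel) \<le>
            (real n1 + 1) * ((b - a) * c1^2 + M^2 * (\<Sum>j<n1. \<integral>s. (ut a b u j s)^2 \<partial>lborel))"
          unfolding c1_def by (rule pi_snd_props(3)[OF D u Mb i ab])
        also have "\<dots> \<le> (real n1 + 1) * ((b - a) * (C^2 * N^2) + M^2 * N^2)"
        proof (rule mult_left_mono)
          have "(b - a) * c1^2 \<le> (b - a) * (C^2 * N^2)" using ab c1sq by (intro mult_left_mono) auto
          moreover have "M^2 * (\<Sum>j<n1. \<integral>s. (ut a b u j s)^2 \<partial>lborel) \<le> M^2 * N^2"
            using L2 by (intro mult_left_mono) auto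
          ultimately show "(b - a) * c1^2 + M^2 * (\<Sum>j<n1. \<integral>s. (ut a b u j s)^2 \<partial>lborel)
              \<le> (b - a) * (C^2 * N^2) + M^2 * N^2" by linarith
        qed simp
        also have "\<dots> = (real n1 + 1) * ((b - a) * C^2 + M^2) * N^2" by (simp add: algebra_simps)
        finally show "(\<integral>s. (ut a b (pi_op a b D u) i s)^2 \<partial>lborel) \<le> (real n1 + 1) * ((b - a) * C^2 + M^2) * N^2" .
      qed
      then show ?thesis by simp
    qed
    have "(rl2_norm a b (pi_op a b D u))^2 \<le> real m2 * (C^2 * N^2) + real n2 * ((real n1 + 1) * ((b - a) * C^2 + M^2) * N^2)"
      unfolding norm_parts[OF pu] using f1 f2 by linarith
    also have "\<dots> = K0 * N^2" unfolding K0_def by (simp add: algebra_simps)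
    also have "\<dots> = (sqrt K0 * N)^2"
    proof -
      have "K0 \<ge> 0" unfolding K0_def using ab by (intro add_nonneg_nonneg mult_nonneg_nonneg) auto
      then show ?thesis by (simp add: power_mult_distrib)
    qed
    finally have "(rl2_norm a b (pi_op a b D u))^2 \<le> (sqrt K0 * N)^2" .
    moreover have "0 \<le> sqrt K0 * N"
    proof -
      have "K0 \<ge> 0" unfolding K0_def using ab by (intro add_nonneg_nonneg mult_nonneg_nonneg) auto
      then show ?thesis using N0 by simp
    qed
    ultimately show "rl2_norm a b (pi_op a b D u) \<le> sqrt K0 * rl2_norm a b u"
      unfolding N_def[symmetric] by (rule power2_le_imp_le)
  qed
qed


definition conv :: "real \<Rightarrow> real \<Rightarrow> 'f filter \<Rightarrow> ('f \<Rightarrow> rl2) \<Rightarrow> rl2 \<Rightarrow> bool" where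
  "conv a b F Y L \<longleftrightarrow> ((\<lambda>h. rl2_norm a b (rl2_sub (Y h) L)) \<longlongrightarrow> 0) F"

lemma norm_sub_self: assumes u: "u \<in> RL2 a b m n" shows "rl2_norm a b (rl2_sub u u) = 0"
proof -
  have "rl2_inner a b (rl2_sub u u) (rl2_sub u u) = 0"
    using inner_sub_left[OF u u RL2_sub[OF u u]] by simp
  then show ?thesis unfolding rl2_norm_def by simp
qed

lemma tri2:
  assumes x: "x \<in> RL2 a b m n" and y: "y \<in> RL2 a b m n"
  shows "rl2_norm a b x \<le> rl2_norm a b y + rl2_norm a b (rl2_sub x y)"
proof -
  have "(rl2_norm a b x)^2 = rl2_inner a b (rl2_sub x y) x + rl2_inner a b y x"
    using norm_sq[OF x] inner_sub_left[OF x y x] by simp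
  also have "\<dots> \<le> rl2_norm a b (rl2_sub x y) * rl2_norm a b x + rl2_norm a b y * rl2_norm a b x"
    using inner_CS[OF RL2_sub[OF x y] x] inner_CS[OF y x] by linarith
  finally have *: "(rl2_norm a b x)^2 \<le> (rl2_norm a b (rl2_sub x y) + rl2_norm a b y) * rl2_norm a b x"
    by (simp add: algebra_simps)
  show ?thesis
  proof (cases "rl2_norm a b x = 0")
    case True then show ?thesis using norm_nonneg[of a b y] norm_nonneg[of a b "rl2_sub x y"] by simp
  next
    case False
    then have "rl2_norm a b x > 0" using norm_nonneg[of a b x] by simp
    with * show ?thesis by (simp add: power2_eq_square)
  qed
qed

lemma norm_scale2:
  assumes x: "x \<in> RL2 a b m n"
  shows "rl2_norm a b (rl2_scale c x) = \<bar>c\<bar> * rl2_norm a b x"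
proof -
  have "rl2_inner a b (rl2_scale c x) (rl2_scale c x) = c^2 * rl2_inner a b x x"
    using inner_scale_left[OF x RL2_scale[OF x]] inner_scale_right[OF x x]
    by (simp add: power2_eq_square)
  then show ?thesis unfolding rl2_norm_def by (simp add: real_sqrt_mult)
qed

lemma conv_inner:
  assumes ev: "eventually (\<lambda>h. Y h \<in> RL2 a b m n \<and> Z h \<in> RL2 a b m n) F"
    and L: "L \<in> RL2 a b m n" and M: "M \<in> RL2 a b m n"
    and cY: "conv a b F Y L" and cZ: "conv a b F Z M"
  shows "((\<lambda>h. rl2_inner a b (Y h) (Z h)) \<longlongrightarrow> rl2_inner a b L M) F"
proof -
  let ?eY = "\<lambda>h. rl2_norm a b (rl2_sub (Y h) L)"
  let ?eZ = "\<lambda>h. rl2_norm a b (rl2_sub (Z h) M)"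
  have lim: "((\<lambda>h. ?eY h * ?eZ h + ?eY h * rl2_norm a b M + rl2_norm a b L * ?eZ h) \<longlongrightarrow> 0) F"
    using cY cZ unfolding conv_def by (auto intro!: tendsto_eq_intros)
  have "((\<lambda>h. rl2_inner a b (Y h) (Z h) - rl2_inner a b L M) \<longlongrightarrow> 0) F"
  proof (rule tendsto_0_le[OF lim, where K=1])
    show "\<forall>\<^sub>F h in F. norm (rl2_inner a b (Y h) (Z h) - rl2_inner a b L M)
        \<le> norm (?eY h * ?eZ h + ?eY h * rl2_norm a b M + rl2_norm a b L * ?eZ h) * 1"
      using ev
    proof eventually_elim
      case (elim h)
      then have Y: "Y h \<in> RL2 a b m n" and Z: "Z h \<in> RL2 a b m n" by auto
      have YL: "rl2_sub (Y h) L \<in> RL2 a b m n" using RL2_sub[OF Y L] .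
      have ZM: "rl2_sub (Z h) M \<in> RL2 a b m n" using RL2_sub[OF Z M] .
      have eq: "rl2_inner a b (Y h) (Z h) - rl2_inner a b L M =
        rl2_inner a b (rl2_sub (Y h) L) (rl2_sub (Z h) M) + rl2_inner a b (rl2_sub (Y h) L) M
        + rl2_inner a b L (rl2_sub (Z h) M)"
        using Y Z L M
        by (simp add: inner_sub_left inner_sub_right RL2_sub inner_commute[OF L Y])
      have "\<bar>rl2_inner a b (Y h) (Z h) - rl2_inner a b L M\<bar> \<le>
         ?eY h * ?eZ h + ?eY h * rl2_norm a b M + rl2_norm a b L * ?eZ h"
        unfolding eq using inner_CS[OF YL ZM] inner_CS[OF YL M] inner_CS[OF L ZM] by linarith
      then show ?case by simp
    qed
  qed
  then show ?thesis by (simp add: LIM_zero_iff)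
qed

definition ncont :: "real \<Rightarrow> real \<Rightarrow> (real \<Rightarrow> rl2) \<Rightarrow> real \<Rightarrow> bool" where
  "ncont a b y \<tau> \<longleftrightarrow> (\<forall>e>0. \<exists>d>0. \<forall>s\<ge>0. \<bar>s - \<tau>\<bar> < d \<longrightarrow> rl2_norm a b (rl2_sub (y s) (y \<tau>)) < e)"

lemma deriv_ncont:
  assumes yH: "\<And>s. s \<ge> 0 \<Longrightarrow> y s \<in> RL2 a b m n" and D: "D \<in> RL2 a b m n"
    and d: "has_rl2_deriv a b y D \<tau>" and t: "\<tau> \<ge> 0"
  shows "ncont a b y \<tau>"
  unfolding ncont_def
proof (intro allI impI)
  fix e :: real assume e: "e > 0"
  have "\<forall>\<^sub>F h in at 0 within {-\<tau>..}. rl2_norm a b (rl2_sub (rl2_scale (1 / h) (rl2_sub (y (\<tau> + h)) (y \<tau>))) D) < 1"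
    using d unfolding has_rl2_deriv_def tendsto_iff by (auto dest!: spec[of _ 1] simp: dist_real_def norm_nonneg)
  then obtain d1 where d1: "d1 > 0" and
    h1: "\<And>h. h \<in> {-\<tau>..} \<Longrightarrow> h \<noteq> 0 \<Longrightarrow> dist h 0 < d1 \<Longrightarrow>
      rl2_norm a b (rl2_sub (rl2_scale (1 / h) (rl2_sub (y (\<tau> + h)) (y \<tau>))) D) < 1"
    unfolding eventually_at by blast
  define d where "d = min d1 (e / (rl2_norm a b D + 1))"
  have dpos: "d > 0" unfolding d_def using d1 e norm_nonneg[of a b D] by simp
  show "\<exists>d>0. \<forall>s\<ge>0. \<bar>s - \<tau>\<bar> < d \<longrightarrow> rl2_norm a b (rl2_sub (y s) (y \<tau>)) < e"
  proof (intro exI[of _ d] conjI dpos allI impI)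
    fix s :: real assume s: "s \<ge> 0" and sd: "\<bar>s - \<tau>\<bar> < d"
    show "rl2_norm a b (rl2_sub (y s) (y \<tau>)) < e"
    proof (cases "s = \<tau>")
      case True then show ?thesis using norm_sub_self[OF yH[OF t]] e by simp
    next
      case False
      define h where "h = s - \<tau>"
      have h0: "h \<noteq> 0" using False h_def by simp
      have sh: "s = \<tau> + h" using h_def by simp
      have dif: "rl2_sub (y s) (y \<tau>) \<in> RL2 a b m n" using RL2_sub[OF yH[OF s] yH[OF t]] .
      have q: "rl2_scale (1/h) (rl2_sub (y s) (y \<tau>)) \<in> RL2 a b m n" using RL2_scale[OF dif] .
      have "rl2_norm a b (rl2_sub (rl2_scale (1 / h) (rl2_sub (y (\<tau> + h)) (y \<tau>))) D) < 1"
        using h1[of h] h0 s sd d_def unfolding h_def by (auto simp: dist_real_def)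
      then have "rl2_norm a b (rl2_scale (1/h) (rl2_sub (y s) (y \<tau>))) < rl2_norm a b D + 1"
        using tri2[OF q D] sh by simp
      then have "\<bar>1/h\<bar> * rl2_norm a b (rl2_sub (y s) (y \<tau>)) < rl2_norm a b D + 1"
        using norm_scale2[OF dif] by simp
      then have "rl2_norm a b (rl2_sub (y s) (y \<tau>)) < \<bar>h\<bar> * (rl2_norm a b D + 1)"
        using h0 by (simp add: field_simps)
      also have "\<dots> \<le> d * (rl2_norm a b D + 1)"
        using sd h_def norm_nonneg[of a b D] by (intro mult_right_mono) auto
      also have "\<dots> \<le> e"
        unfolding d_def using norm_nonneg[of a b D] e
        by (smt (verit, best) divide_pos_pos min.cobounded2 mult_le_cancel_right_pos nonzero_eq_divide_eq)
      finally show ?thesis .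
    qed
  qed
qed

lemma ncont_tendsto:
  assumes nc: "ncont a b y \<tau>" and g: "(g \<longlongrightarrow> \<tau>) F" and ev: "eventually (\<lambda>h. g h \<ge> 0) F"
  shows "conv a b F (\<lambda>h. y (g h)) (y \<tau>)"
  unfolding conv_def tendsto_iff
proof (intro allI impI)
  fix e :: real assume e: "e > 0"
  obtain d where d: "d > 0" "\<And>s. s \<ge> 0 \<Longrightarrow> \<bar>s - \<tau>\<bar> < d \<Longrightarrow> rl2_norm a b (rl2_sub (y s) (y \<tau>)) < e"
    using nc e unfolding ncont_def by blast
  have "eventually (\<lambda>h. dist (g h) \<tau> < d) F" using g d(1) unfolding tendsto_iff by blast
  then show "\<forall>\<^sub>F h in F. dist (rl2_norm a b (rl2_sub (y (g h)) (y \<tau>))) 0 < e"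
    using ev by eventually_elim (use d norm_nonneg in \<open>auto simp: dist_real_def\<close>)
qed

lemma deriv_at:
  assumes d: "has_rl2_deriv a b y D \<tau>" and t: "\<tau> > 0"
  shows "conv a b (at 0) (\<lambda>h. rl2_scale (1 / h) (rl2_sub (y (\<tau> + h)) (y \<tau>))) D"
proof -
  have "((\<lambda>h. rl2_norm a b (rl2_sub (rl2_scale (1 / h) (rl2_sub (y (\<tau> + h)) (y \<tau>))) D)) \<longlongrightarrow> 0)
     (at 0 within {-\<tau><..})"
    using d unfolding has_rl2_deriv_def by (rule tendsto_within_subset) auto
  moreover have "at (0::real) within {-\<tau><..} = at 0" using t by (intro at_within_open) auto
  ultimately show ?thesis unfolding conv_def by simp
qed

lemma lim_neg: fixes f :: "real \<Rightarrow> real" assumes f: "(f \<longlongrightarrow> l) (at (0::real))" shows "((\<lambda>h. f (-h)) \<longlongrightarrow> l) (at 0)"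
  unfolding tendsto_iff
proof (intro allI impI)
  fix e :: real assume e: "e > 0"
  then have "eventually (\<lambda>x. dist (f x) l < e) (at 0)" using f unfolding tendsto_iff by blast
  then obtain d where d: "d > 0" "\<And>x. x \<noteq> 0 \<Longrightarrow> dist x 0 < d \<Longrightarrow> dist (f x) l < e"
    unfolding eventually_at by auto
  show "eventually (\<lambda>x. dist (f (- x)) l < e) (at 0)"
    unfolding eventually_at using d by (intro exI[of _ d]) (auto simp: dist_real_def)
qed

lemma sol_H: "pie_solution a b H T A B v x \<Longrightarrow> t \<ge> 0 \<Longrightarrow> x t \<in> H"
  unfolding pie_solution_def rl2_C1_def by blast

lemma sol_deriv: "pie_solution a b H T A B v x \<Longrightarrow> t \<ge> 0 \<Longrightarrow>
    has_rl2_deriv a b (\<lambda>\<tau>. T (x \<tau>)) (A (x t)) t"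
  unfolding pie_solution_def by blast

lemma sol_init: "pie_solution a b H T A B v x \<Longrightarrow> rl2_dist a b (T (x 0)) (B v) = 0"
  unfolding pie_solution_def by blast

lemma sol_ncont:
  assumes x: "pie_solution a b (RL2 a b m n) T A B v x" and t: "t \<ge> 0"
  shows "ncont a b x t"
proof -
  obtain x' where x': "\<And>t. t \<ge> 0 \<Longrightarrow> x t \<in> RL2 a b m n \<and> x' t \<in> RL2 a b m n \<and> has_rl2_deriv a b x (x' t) t"
    using x unfolding pie_solution_def rl2_C1_def by blast
  show ?thesis using x' t by (intro deriv_ncont[of x a b m n "x' t"]) auto
qed

lemma adj_eq: "is_adjoint a b H1 H2 F G \<Longrightarrow> u \<in> H1 \<Longrightarrow> v \<in> H2 \<Longrightarrow>
   rl2_inner a b (F u) v = rl2_inner a b u (G v)"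
  unfolding is_adjoint_def by blast

lemma adj_map: "is_adjoint a b H1 H2 F G \<Longrightarrow> v \<in> H2 \<Longrightarrow> G v \<in> H1"
  unfolding is_adjoint_def by blast

lemma conv_const: "L \<in> RL2 a b m n \<Longrightarrow> conv a b F (\<lambda>h. L) L"
  unfolding conv_def using norm_sub_self by simp

lemma ev_at0: "(\<tau>::real) > 0 \<Longrightarrow> eventually (\<lambda>h. h \<noteq> 0 \<and> \<bar>h\<bar> < \<tau>) (at 0)"
  unfolding eventually_at by (intro exI[of _ \<tau>]) (auto simp: dist_real_def)

lemma ev_within: "eventually (\<lambda>s. s \<in> S) (at (r::real) within S)"
  unfolding eventually_at by (intro exI[of _ 1]) auto

lemma lyapunov:
  assumes Qmap: "\<And>u. u \<in> RL2 a b m n \<Longrightarrow> Q u \<in> RL2 a b m n"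
    and Qsym: "\<And>u v. u \<in> RL2 a b m n \<Longrightarrow> v \<in> RL2 a b m n \<Longrightarrow> rl2_inner a b (Q u) v = rl2_inner a b u (Q v)"
    and Qlip: "\<And>u v. u \<in> RL2 a b m n \<Longrightarrow> v \<in> RL2 a b m n \<Longrightarrow>
        rl2_norm a b (rl2_sub (Q u) (Q v)) \<le> K * rl2_norm a b (rl2_sub u v)"
    and y: "\<And>\<tau>. \<tau> \<ge> 0 \<Longrightarrow> y \<tau> \<in> RL2 a b m n \<and> w \<tau> \<in> RL2 a b m n \<and> has_rl2_deriv a b y (w \<tau>) \<tau>"
    and neg: "\<And>\<tau>. \<tau> \<ge> 0 \<Longrightarrow> rl2_inner a b (w \<tau>) (Q (y \<tau>)) \<le> 0"
    and t: "t \<ge> 0"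
  shows "rl2_inner a b (y t) (Q (y t)) \<le> rl2_inner a b (y 0) (Q (y 0))"
proof -
  define V where "V s = rl2_inner a b (y s) (Q (y s))" for s
  have yH: "\<And>s. s \<ge> 0 \<Longrightarrow> y s \<in> RL2 a b m n" using y by blast
  have wH: "\<And>s. s \<ge> 0 \<Longrightarrow> w s \<in> RL2 a b m n" using y by blast
  have nc: "\<And>s. s \<ge> 0 \<Longrightarrow> ncont a b y s"
  proof -
    fix s :: real assume s: "s \<ge> 0"
    show "ncont a b y s" by (rule deriv_ncont[of y a b m n, OF yH wH[OF s] _ s]) (use y s in auto)
  qed
  have convQ: "conv a b F (\<lambda>h. Q (y (g h))) (Q (y s))"
    if c: "conv a b F (\<lambda>h. y (g h)) (y s)" and ev: "eventually (\<lambda>h. g h \<ge> 0) F" and s: "s \<ge> 0"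
    for F :: "real filter" and g s
    unfolding conv_def
  proof (rule tendsto_0_le[OF c[unfolded conv_def], where K=K])
    show "\<forall>\<^sub>F h in F. norm (rl2_norm a b (rl2_sub (Q (y (g h))) (Q (y s))))
        \<le> norm (rl2_norm a b (rl2_sub (y (g h)) (y s))) * K"
      using ev
    proof eventually_elim
      case (elim h)
      then show ?case using Qlip[OF yH[OF elim] yH[OF s]] norm_nonneg[of a b]
        by (simp add: mult.commute)
    qed
  qed
  have der: "DERIV V \<tau> :> 2 * rl2_inner a b (w \<tau>) (Q (y \<tau>))" if \<tau>: "\<tau> > 0" for \<tau>
  proof -
    let ?D = "\<lambda>h. rl2_scale (1/h) (rl2_sub (y (\<tau>+h)) (y \<tau>))"
    have t0: "\<tau> \<ge> 0" using \<tau> by simp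
    have cD: "conv a b (at 0) ?D (w \<tau>)" using deriv_at[of a b y "w \<tau>" \<tau>] y[OF t0] \<tau> by simp
    have ev: "eventually (\<lambda>h. h \<noteq> 0 \<and> \<tau> + h \<ge> 0) (at (0::real))"
      using ev_at0[OF \<tau>] by eventually_elim auto
    have ev2: "eventually (\<lambda>h. \<tau> + h \<ge> 0) (at (0::real))" using ev by eventually_elim auto
    have lim: "((\<lambda>h. \<tau> + h) \<longlongrightarrow> \<tau>) (at (0::real))"
      by (auto intro!: tendsto_eq_intros)
    have cy: "conv a b (at 0) (\<lambda>h. y (\<tau> + h)) (y \<tau>)"
      by (rule ncont_tendsto[OF nc[OF t0] lim ev2])
    have cQ: "conv a b (at 0) (\<lambda>h. Q (y (\<tau> + h))) (Q (y \<tau>))"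
      by (rule convQ[OF cy ev2 t0])
    have evH: "eventually (\<lambda>h. ?D h \<in> RL2 a b m n \<and> Q (y (\<tau> + h)) \<in> RL2 a b m n) (at 0)"
      using ev2
    proof eventually_elim
      case (elim h)
      then show ?case using RL2_scale[OF RL2_sub[OF yH[OF elim] yH[OF t0]]] Qmap[OF yH[OF elim]] by simp
    qed
    have l1: "((\<lambda>h. rl2_inner a b (?D h) (Q (y (\<tau>+h)))) \<longlongrightarrow> rl2_inner a b (w \<tau>) (Q (y \<tau>))) (at 0)"
      by (rule conv_inner[OF evH wH[OF t0] Qmap[OF yH[OF t0]] cD cQ])
    have evH2: "eventually (\<lambda>h. Q (y \<tau>) \<in> RL2 a b m n \<and> ?D h \<in> RL2 a b m n) (at 0)"
      using evH by eventually_elim (use Qmap[OF yH[OF t0]] in simp)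
    have l2: "((\<lambda>h. rl2_inner a b (Q (y \<tau>)) (?D h)) \<longlongrightarrow> rl2_inner a b (Q (y \<tau>)) (w \<tau>)) (at 0)"
      by (rule conv_inner[OF evH2 Qmap[OF yH[OF t0]] wH[OF t0] conv_const[OF Qmap[OF yH[OF t0]]] cD])
    have l3: "((\<lambda>h. rl2_inner a b (?D h) (Q (y (\<tau>+h))) + rl2_inner a b (Q (y \<tau>)) (?D h)) \<longlongrightarrow>
       2 * rl2_inner a b (w \<tau>) (Q (y \<tau>))) (at 0)"
      using tendsto_add[OF l1 l2] inner_commute[OF Qmap[OF yH[OF t0]] wH[OF t0]] by simp
    have "eventually (\<lambda>h. rl2_inner a b (?D h) (Q (y (\<tau>+h))) + rl2_inner a b (Q (y \<tau>)) (?D h)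
        = (V (\<tau> + h) - V \<tau>) / h) (at 0)"
      using ev
    proof eventually_elim
      case (elim h)
      have y1: "y (\<tau> + h) \<in> RL2 a b m n" using yH elim by simp
      have y0: "y \<tau> \<in> RL2 a b m n" using yH t0 by simp
      have dd: "rl2_sub (y (\<tau> + h)) (y \<tau>) \<in> RL2 a b m n" using RL2_sub[OF y1 y0] .
      have "rl2_inner a b (?D h) (Q (y (\<tau>+h))) =
          (1/h) * (rl2_inner a b (y (\<tau>+h)) (Q (y (\<tau>+h))) - rl2_inner a b (y \<tau>) (Q (y (\<tau>+h))))"
        using inner_scale_left[OF dd Qmap[OF y1]] inner_sub_left[OF y1 y0 Qmap[OF y1]] by simp
      moreover have "rl2_inner a b (Q (y \<tau>)) (?D h) =
          (1/h) * (rl2_inner a b (Q (y \<tau>)) (y (\<tau>+h)) - rl2_inner a b (Q (y \<tau>)) (y \<tau>))"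
        using inner_scale_right[OF dd Qmap[OF y0]] inner_sub_right[OF y1 y0 Qmap[OF y0]] by simp
      moreover have "rl2_inner a b (Q (y \<tau>)) (y (\<tau>+h)) = rl2_inner a b (y \<tau>) (Q (y (\<tau>+h)))"
        using Qsym[OF y0 y1] .
      moreover have "rl2_inner a b (Q (y \<tau>)) (y \<tau>) = rl2_inner a b (y \<tau>) (Q (y \<tau>))"
        using Qsym[OF y0 y0] .
      ultimately show ?case unfolding V_def by (simp add: algebra_simps diff_divide_distrib)
    qed
    from Lim_transform_eventually[OF l3 this] show ?thesis by (simp add: DERIV_def)
  qed
  have cont: "continuous_on {0..t} V"
    unfolding continuous_on_def
  proof
    fix r assume r: "r \<in> {0..t}"
    then have r0: "r \<ge> 0" by simp
    have ev: "eventually (\<lambda>s. s \<ge> 0) (at r within {0..t})"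
      using ev_within[of "{0..t}" r] by eventually_elim auto
    have cy: "conv a b (at r within {0..t}) (\<lambda>s. y s) (y r)"
      using ncont_tendsto[OF nc[OF r0], of "\<lambda>s. s"] ev by (simp add: tendsto_ident_at)
    have cQ: "conv a b (at r within {0..t}) (\<lambda>s. Q (y s)) (Q (y r))"
      using convQ[of "at r within {0..t}" "\<lambda>s. s" r] cy ev r0 by simp
    have evH: "eventually (\<lambda>s. y s \<in> RL2 a b m n \<and> Q (y s) \<in> RL2 a b m n) (at r within {0..t})"
      using ev
    proof eventually_elim
      case (elim s)
      then show ?case using yH[OF elim] Qmap[OF yH[OF elim]] by simp
    qed
    show "(V \<longlongrightarrow> V r) (at r within {0..t})"
      unfolding V_def by (rule conv_inner[OF evH yH[OF r0] Qmap[OF yH[OF r0]] cy cQ])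
  qed
  have "V t \<le> V 0"
  proof (rule DERIV_nonpos_imp_decreasing_open[OF t _ cont])
    fix x :: real assume "0 < x" "x < t"
    then show "\<exists>y. DERIV V x :> y \<and> y \<le> 0" using der[of x] neg[of x] by (intro exI[of _ "2 * rl2_inner a b (w x) (Q (y x))"]) simp
  qed
  then show ?thesis unfolding V_def .
qed

lemma duality:
  assumes Tmap: "\<And>u. u \<in> RL2 a b m n \<Longrightarrow> T u \<in> RL2 a b m n"
    and Amap: "\<And>u. u \<in> RL2 a b m n \<Longrightarrow> A u \<in> RL2 a b m n"
    and adjT: "is_adjoint a b (RL2 a b m n) (RL2 a b m n) T Ts"
    and adjA: "is_adjoint a b (RL2 a b m n) (RL2 a b m n) A As"
    and x: "pie_solution a b (RL2 a b m n) T A B v x"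
    and xb: "pie_solution a b (RL2 a b m n) Ts As Cs vb xb"
    and t: "t \<ge> 0"
  shows "rl2_inner a b (T (x t)) (xb 0) = rl2_inner a b (T (x 0)) (xb t)"
proof (cases "t = 0")
  case True then show ?thesis by simp
next
  case False
  then have tp: "t > 0" using t by simp
  have xH: "\<And>s. s \<ge> 0 \<Longrightarrow> x s \<in> RL2 a b m n" using sol_H[OF x] .
  have xbH: "\<And>s. s \<ge> 0 \<Longrightarrow> xb s \<in> RL2 a b m n" using sol_H[OF xb] .
  have TxH: "\<And>s. s \<ge> 0 \<Longrightarrow> T (x s) \<in> RL2 a b m n" using Tmap xH by blast
  have TsH: "\<And>s. s \<ge> 0 \<Longrightarrow> Ts (xb s) \<in> RL2 a b m n" using adj_map[OF adjT] xbH by blast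
  have dT: "\<And>s. s \<ge> 0 \<Longrightarrow> has_rl2_deriv a b (\<lambda>\<tau>. T (x \<tau>)) (A (x s)) s" using sol_deriv[OF x] .
  have dTs: "\<And>s. s \<ge> 0 \<Longrightarrow> has_rl2_deriv a b (\<lambda>\<tau>. Ts (xb \<tau>)) (As (xb s)) s" using sol_deriv[OF xb] .
  have ncT: "\<And>s. s \<ge> 0 \<Longrightarrow> ncont a b (\<lambda>\<tau>. T (x \<tau>)) s"
  proof -
    fix s :: real assume s: "s \<ge> 0"
    show "ncont a b (\<lambda>\<tau>. T (x \<tau>)) s"
      by (rule deriv_ncont[of "\<lambda>\<tau>. T (x \<tau>)" a b m n, OF TxH Amap[OF xH[OF s]] dT[OF s] s])
  qed
  have ncb: "\<And>s. s \<ge> 0 \<Longrightarrow> ncont a b xb s" using sol_ncont[OF xb] .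
  define \<phi> where "\<phi> r = rl2_inner a b (T (x r)) (xb (t - r))" for r
  have der: "DERIV \<phi> r :> 0" if r1: "0 < r" and r2: "r < t" for r
  proof -
    have r0: "r \<ge> 0" using r1 by simp
    have tr0: "t - r \<ge> 0" using r2 by simp
    have trp: "t - r > 0" using r2 by simp
    let ?D = "\<lambda>h. rl2_scale (1/h) (rl2_sub (T (x (r+h))) (T (x r)))"
    let ?F = "\<lambda>k. rl2_scale (1/k) (rl2_sub (Ts (xb (t - r + k))) (Ts (xb (t - r))))"
    have cD: "conv a b (at 0) ?D (A (x r))" using deriv_at[OF dT[OF r0] r1] .
    have cF: "conv a b (at 0) ?F (As (xb (t - r)))" using deriv_at[OF dTs[OF tr0] trp] .
    have m: "min r (t - r) > 0" using r1 r2 by simp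
    have ev: "eventually (\<lambda>h. h \<noteq> 0 \<and> r + h \<ge> 0 \<and> t - r - h \<ge> 0) (at (0::real))"
      using ev_at0[OF m] by eventually_elim auto
    have ev2: "eventually (\<lambda>h. t - r - h \<ge> 0) (at (0::real))" using ev by eventually_elim auto
    have lim: "((\<lambda>h. t - r - h) \<longlongrightarrow> t - r) (at (0::real))"
      by (auto intro!: tendsto_eq_intros)
    have cX: "conv a b (at 0) (\<lambda>h. xb (t - r - h)) (xb (t - r))"
      by (rule ncont_tendsto[OF ncb[OF tr0] lim ev2])
    have evH: "eventually (\<lambda>h. ?D h \<in> RL2 a b m n \<and> xb (t - r - h) \<in> RL2 a b m n) (at 0)"
      using ev
    proof eventually_elim
      case (elim h)
      then show ?case using RL2_scale[OF RL2_sub[OF TxH[of "r+h"] TxH[OF r0]]] xbH[of "t - r - h"] by simp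
    qed
    have l1: "((\<lambda>h. rl2_inner a b (?D h) (xb (t - r - h))) \<longlongrightarrow> rl2_inner a b (A (x r)) (xb (t - r))) (at 0)"
      by (rule conv_inner[OF evH Amap[OF xH[OF r0]] xbH[OF tr0] cD cX])
    have evF: "eventually (\<lambda>k. ?F k \<in> RL2 a b m n \<and> x r \<in> RL2 a b m n) (at 0)"
      using ev_at0[OF trp]
    proof eventually_elim
      case (elim k)
      then have "0 \<le> t - r + k" by linarith
      then show ?case using RL2_scale[OF RL2_sub[OF TsH[of "t - r + k"] TsH[OF tr0]]] xH[OF r0] by simp
    qed
    have l2: "((\<lambda>k. rl2_inner a b (?F k) (x r)) \<longlongrightarrow> rl2_inner a b (As (xb (t - r))) (x r)) (at 0)"
      by (rule conv_inner[OF evF adj_map[OF adjA xbH[OF tr0]] xH[OF r0] cF conv_const[OF xH[OF r0]]])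
    have l2': "((\<lambda>h. rl2_inner a b (?F (-h)) (x r)) \<longlongrightarrow> rl2_inner a b (As (xb (t - r))) (x r)) (at 0)"
      by (rule lim_neg[OF l2])
    have eq0: "rl2_inner a b (A (x r)) (xb (t - r)) - rl2_inner a b (As (xb (t - r))) (x r) = 0"
      using adj_eq[OF adjA xH[OF r0] xbH[OF tr0]] inner_commute[OF xH[OF r0] adj_map[OF adjA xbH[OF tr0]]]
      by simp
    have l3: "((\<lambda>h. rl2_inner a b (?D h) (xb (t - r - h)) - rl2_inner a b (?F (-h)) (x r)) \<longlongrightarrow> 0) (at 0)"
      using tendsto_diff[OF l1 l2'] eq0 by simp
    have "eventually (\<lambda>h. rl2_inner a b (?D h) (xb (t - r - h)) - rl2_inner a b (?F (-h)) (x r)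
        = (\<phi> (r + h) - \<phi> r) / h) (at 0)"
      using ev
    proof eventually_elim
      case (elim h)
      have h0: "h \<noteq> 0" using elim by simp
      have e1: "t - r + - h = t - r - h" by simp
      have e2: "t - (r + h) = t - r - h" by simp
      have Tx1: "T (x (r + h)) \<in> RL2 a b m n" using TxH elim by simp
      have Tx0: "T (x r) \<in> RL2 a b m n" using TxH r0 by simp
      have X1: "xb (t - r - h) \<in> RL2 a b m n" using xbH elim by simp
      have X0: "xb (t - r) \<in> RL2 a b m n" using xbH tr0 by simp
      have TsX1: "Ts (xb (t - r - h)) \<in> RL2 a b m n" using adj_map[OF adjT X1] .
      have TsX0: "Ts (xb (t - r)) \<in> RL2 a b m n" using adj_map[OF adjT X0] .
      have x0: "x r \<in> RL2 a b m n" using xH r0 by simp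
      have "rl2_inner a b (?D h) (xb (t - r - h)) =
          (1/h) * (rl2_inner a b (T (x (r+h))) (xb (t - r - h)) - rl2_inner a b (T (x r)) (xb (t - r - h)))"
        using inner_scale_left[OF RL2_sub[OF Tx1 Tx0] X1] inner_sub_left[OF Tx1 Tx0 X1] by simp
      moreover have "rl2_inner a b (?F (-h)) (x r) =
          (1/(-h)) * (rl2_inner a b (Ts (xb (t - r - h))) (x r) - rl2_inner a b (Ts (xb (t - r))) (x r))"
        unfolding e1
        using inner_scale_left[OF RL2_sub[OF TsX1 TsX0] x0] inner_sub_left[OF TsX1 TsX0 x0] by simp
      moreover have "rl2_inner a b (Ts (xb (t - r - h))) (x r) = rl2_inner a b (T (x r)) (xb (t - r - h))"
        using adj_eq[OF adjT x0 X1] inner_commute[OF x0 TsX1] by simp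
      moreover have "rl2_inner a b (Ts (xb (t - r))) (x r) = rl2_inner a b (T (x r)) (xb (t - r))"
        using adj_eq[OF adjT x0 X0] inner_commute[OF x0 TsX0] by simp
      ultimately show ?case unfolding \<phi>_def e2 using h0
        by (simp add: field_simps)
    qed
    from Lim_transform_eventually[OF l3 this] show ?thesis by (simp add: DERIV_def)
  qed
  have cont: "continuous_on {0..t} \<phi>"
    unfolding continuous_on_def
  proof
    fix r assume r: "r \<in> {0..t}"
    then have r0: "r \<ge> 0" and tr0: "t - r \<ge> 0" by auto
    have ev: "eventually (\<lambda>s. s \<ge> 0 \<and> t - s \<ge> 0) (at r within {0..t})"
      using ev_within[of "{0..t}" r] by eventually_elim auto
    have ev1: "eventually (\<lambda>s. s \<ge> 0) (at r within {0..t})" using ev by eventually_elim auto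
    have ev2: "eventually (\<lambda>s. t - s \<ge> 0) (at r within {0..t})" using ev by eventually_elim auto
    have cy: "conv a b (at r within {0..t}) (\<lambda>s. T (x s)) (T (x r))"
      using ncont_tendsto[OF ncT[OF r0], of "\<lambda>s. s"] ev1 by (simp add: tendsto_ident_at)
    have lim: "((\<lambda>s. t - s) \<longlongrightarrow> t - r) (at r within {0..t})"
      by (auto intro!: tendsto_eq_intros)
    have cX: "conv a b (at r within {0..t}) (\<lambda>s. xb (t - s)) (xb (t - r))"
      by (rule ncont_tendsto[OF ncb[OF tr0] lim ev2])
    have evH: "eventually (\<lambda>s. T (x s) \<in> RL2 a b m n \<and> xb (t - s) \<in> RL2 a b m n) (at r within {0..t})"
      using ev
    proof eventually_elim
      case (elim s)
      then show ?case using TxH[of s] xbH[of "t - s"] by simp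
    qed
    show "(\<phi> \<longlongrightarrow> \<phi> r) (at r within {0..t})"
      unfolding \<phi>_def by (rule conv_inner[OF evH TxH[OF r0] xbH[OF tr0] cy cX])
  qed
  have "\<phi> t = \<phi> 0" by (rule DERIV_isconst_end[OF tp cont der])
  then show ?thesis unfolding \<phi>_def by simp
qed


lemma opl_ge: "op_le a b H P R \<Longrightarrow> h \<in> H \<Longrightarrow> rl2_inner a b h (rl2_sub (R h) (P h)) \<ge> 0"
  unfolding op_le_def op_psd_def by blast

lemma zero_RL2: "op_zero m n u \<in> RL2 a b m n"
  unfolding RL2_iff op_zero_def ut_def by simp

lemma inner_zero: assumes w: "w \<in> RL2 a b m n" shows "rl2_inner a b w (op_zero m n u) = 0"
  unfolding inner_formula[OF w zero_RL2] by (simp add: op_zero_def ut_def)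

lemma dist0_inner:
  assumes u: "u \<in> RL2 a b m n" and v: "v \<in> RL2 a b m n" and w: "w \<in> RL2 a b m n"
    and d: "rl2_dist a b u v = 0"
  shows "rl2_inner a b u w = rl2_inner a b v w"
proof -
  have "\<bar>rl2_inner a b (rl2_sub u v) w\<bar> \<le> rl2_dist a b u v * rl2_norm a b w"
    unfolding rl2_dist_def by (rule inner_CS[OF RL2_sub[OF u v] w])
  then have "rl2_inner a b (rl2_sub u v) w = 0" using d by simp
  then show ?thesis using inner_sub_left[OF u v w] by simp
qed

lemma inner_zero_sub_add:
  assumes h: "h \<in> RL2 a b m n" and p: "p \<in> RL2 a b m n" and q: "q \<in> RL2 a b m n"
  shows "rl2_inner a b h (rl2_sub (op_zero m n u) (rl2_add p q)) = - rl2_inner a b h p - rl2_inner a b h q"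
  using inner_sub_right[OF zero_RL2 RL2_add[OF p q] h] inner_zero[OF h] inner_add_right[OF p q h]
  by simp

lemma Q_consistent:
  assumes Qmap: "\<And>u. u \<in> RL2 a b m n \<Longrightarrow> Q u \<in> RL2 a b m n"
    and Qsym: "\<And>u v. u \<in> RL2 a b m n \<Longrightarrow> v \<in> RL2 a b m n \<Longrightarrow> rl2_inner a b (Q u) v = rl2_inner a b u (Q v)"
    and y: "y \<in> RL2 a b m n" and c: "c \<in> RL2 a b m n" and d: "rl2_dist a b y c = 0"
  shows "rl2_inner a b y (Q y) = rl2_inner a b c (Q c)"
proof -
  have "rl2_inner a b y (Q y) = rl2_inner a b c (Q y)" by (rule dist0_inner[OF y c Qmap[OF y] d])
  also have "\<dots> = rl2_inner a b (Q c) y" using Qsym[OF c y] inner_commute[OF c Qmap[OF y]] by simp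
  also have "\<dots> = rl2_inner a b (Q c) c"
    using dist0_inner[OF y c Qmap[OF c] d] inner_commute[OF Qmap[OF c]] y c by metis
  also have "\<dots> = rl2_inner a b c (Q c)" using inner_commute[OF Qmap[OF c] c] .
  finally show ?thesis .
qed

lemma norm_sub_commute:
  assumes x: "x \<in> RL2 a b m n" and y: "y \<in> RL2 a b m n"
  shows "rl2_norm a b (rl2_sub x y) = rl2_norm a b (rl2_sub y x)"
proof -
  have "rl2_inner a b (rl2_sub x y) (rl2_sub x y) = rl2_inner a b (rl2_sub y x) (rl2_sub y x)"
    using x y RL2_sub[OF x y] RL2_sub[OF y x]
    by (simp add: inner_sub_left inner_sub_right inner_commute[OF x y])
  then show ?thesis unfolding rl2_norm_def by simp
qed

lemma norm_tri:
  assumes x: "x \<in> RL2 a b m n" and y: "y \<in> RL2 a b m n"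
  shows "rl2_norm a b x \<le> rl2_norm a b y + rl2_norm a b (rl2_sub x y)"
proof -
  have "(rl2_norm a b x)^2 = rl2_inner a b (rl2_sub x y) x + rl2_inner a b y x"
    using norm_sq[OF x] inner_sub_left[OF x y x] by simp
  also have "\<dots> \<le> rl2_norm a b (rl2_sub x y) * rl2_norm a b x + rl2_norm a b y * rl2_norm a b x"
    using inner_CS[OF RL2_sub[OF x y] x] inner_CS[OF y x] by linarith
  finally have *: "(rl2_norm a b x)^2 \<le> (rl2_norm a b (rl2_sub x y) + rl2_norm a b y) * rl2_norm a b x"
    by (simp add: algebra_simps)
  show ?thesis
  proof (cases "rl2_norm a b x = 0")
    case True then show ?thesis using norm_nonneg[of a b y] norm_nonneg[of a b "rl2_sub x y"] by simp
  next
    case False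
    then have "rl2_norm a b x > 0" using norm_nonneg[of a b x] by simp
    with * show ?thesis by (simp add: power2_eq_square)
  qed
qed

lemma norm_scale:
  assumes x: "x \<in> RL2 a b m n"
  shows "rl2_norm a b (rl2_scale c x) = \<bar>c\<bar> * rl2_norm a b x"
proof -
  have "rl2_inner a b (rl2_scale c x) (rl2_scale c x) = c^2 * rl2_inner a b x x"
    using inner_scale_left[OF x RL2_scale[OF x]] inner_scale_right[OF x x]
    by (simp add: power2_eq_square)
  then show ?thesis unfolding rl2_norm_def by (simp add: real_sqrt_mult)
qed

lemma Q_lip:
  assumes Qmap: "\<And>u. u \<in> RL2 a b m n \<Longrightarrow> Q u \<in> RL2 a b m n"
    and Qsym: "\<And>u v. u \<in> RL2 a b m n \<Longrightarrow> v \<in> RL2 a b m n \<Longrightarrow> rl2_inner a b (Q u) v = rl2_inner a b u (Q v)"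
    and K: "\<And>u. u \<in> RL2 a b m n \<Longrightarrow> rl2_norm a b (Q u) \<le> K * rl2_norm a b u"
    and u: "u \<in> RL2 a b m n" and v: "v \<in> RL2 a b m n"
  shows "rl2_norm a b (rl2_sub (Q u) (Q v)) \<le> K * rl2_norm a b (rl2_sub u v)"
proof -
  have uv: "rl2_sub u v \<in> RL2 a b m n" by (rule RL2_sub[OF u v])
  have Quv: "Q (rl2_sub u v) \<in> RL2 a b m n" by (rule Qmap[OF uv])
  have QQ: "rl2_sub (Q u) (Q v) \<in> RL2 a b m n" by (rule RL2_sub[OF Qmap[OF u] Qmap[OF v]])
  define d where "d = rl2_sub (rl2_sub (Q u) (Q v)) (Q (rl2_sub u v))"
  have dH: "d \<in> RL2 a b m n" unfolding d_def by (rule RL2_sub[OF QQ Quv])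
  have "\<And>w. w \<in> RL2 a b m n \<Longrightarrow> rl2_inner a b d w = 0"
  proof -
    fix w assume w: "w \<in> RL2 a b m n"
    have "rl2_inner a b d w = rl2_inner a b (Q u) w - rl2_inner a b (Q v) w - rl2_inner a b (Q (rl2_sub u v)) w"
      unfolding d_def using inner_sub_left[OF QQ Quv w] inner_sub_left[OF Qmap[OF u] Qmap[OF v] w] by simp
    also have "\<dots> = rl2_inner a b u (Q w) - rl2_inner a b v (Q w) - rl2_inner a b (rl2_sub u v) (Q w)"
      using Qsym[OF u w] Qsym[OF v w] Qsym[OF uv w] by simp
    also have "\<dots> = 0" using inner_sub_left[OF u v Qmap[OF w]] by simp
    finally show "rl2_inner a b d w = 0" .
  qed
  then have "rl2_inner a b d d = 0" using dH by blast
  then have d0: "rl2_norm a b d = 0" unfolding rl2_norm_def by simp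
  have "rl2_norm a b (rl2_sub (Q u) (Q v)) \<le> rl2_norm a b (Q (rl2_sub u v)) + rl2_norm a b d"
    unfolding d_def by (rule norm_tri[OF QQ Quv])
  also have "\<dots> \<le> K * rl2_norm a b (rl2_sub u v)" using d0 K[OF uv] by simp
  finally show ?thesis .
qed

lemma adj_eq_sym:
  assumes adj: "is_adjoint a b (RL2 a b m n) (RL2 a b m' n') F G" and u: "u \<in> RL2 a b m n"
    and v: "v \<in> RL2 a b m' n'" and Fu: "F u \<in> RL2 a b m' n'"
  shows "rl2_inner a b v (F u) = rl2_inner a b (G v) u"
proof -
  have Gv: "G v \<in> RL2 a b m n" using adj v unfolding is_adjoint_def by blast
  have "rl2_inner a b v (F u) = rl2_inner a b (F u) v" by (rule inner_commute[OF v Fu])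
  also have "\<dots> = rl2_inner a b u (G v)" using adj u v unfolding is_adjoint_def by blast
  also have "\<dots> = rl2_inner a b (G v) u" by (rule inner_commute[OF u Gv])
  finally show ?thesis .
qed

theorem theorem2:
  fixes a b :: real and m n nw nz :: nat
    and T4 A4 B4 C4 Q4 :: pi4
    and Ts As Bs Cs :: "rl2 \<Rightarrow> rl2"
    and \<gamma> :: real
  defines "H \<equiv> RL2 a b m n" and "W \<equiv> RL2 a b nw 0" and "Z \<equiv> RL2 a b nz 0"
  defines "T \<equiv> pi_op a b T4" and "A \<equiv> pi_op a b A4" and "B \<equiv> pi_op a b B4"
      and "C \<equiv> pi_op a b C4" and "Q \<equiv> pi_op a b Q4"
  assumes ab: "a < b"
    and piT: "is_pi4 m n m n T4" and piA: "is_pi4 m n m n A4"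
    and piB: "is_pi4 nw 0 m n B4" and piC: "is_pi4 m n nz 0 C4"
    and adjT: "is_adjoint a b H H T Ts" and adjA: "is_adjoint a b H H A As"
    and adjB: "is_adjoint a b W H B Bs" and adjC: "is_adjoint a b H Z C Cs"
    and wp: "pie_well_posed a b H W T A B"
    and wp_dual: "pie_well_posed a b H Z Ts As Cs"
    and gamma_pos: "\<gamma> > 0"
    and piQ: "is_pi4 m n m n Q4"
    and Q_psd: "op_psd a b H Q"
    and conds:
      "(op_le a b W (\<lambda>v. Bs (Q (B v))) (\<lambda>v. v) \<and>
        op_le a b H (\<lambda>u. rl2_add (As (Q (T u))) (Ts (Q (A u)))) (op_zero m n) \<and>
        op_le a b H (\<lambda>u. rl2_scale (1 / \<gamma>^2) (Cs (C u))) (\<lambda>u. Ts (Q (T u))))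
       \<or>
       (op_le a b Z (\<lambda>w. C (Q (Cs w))) (\<lambda>w. w) \<and>
        op_le a b H (\<lambda>u. rl2_add (A (Q (Ts u))) (T (Q (As u)))) (op_zero m n) \<and>
        op_le a b H (\<lambda>u. rl2_scale (1 / \<gamma>^2) (B (Bs u))) (\<lambda>u. T (Q (Ts u))))"
  shows "ip_norm a b H W T A B C \<le> ereal \<gamma>"
proof -
  have Tm: "\<And>u. u \<in> H \<Longrightarrow> T u \<in> H" unfolding H_def T_def using pi_op_RL2[OF piT ab] .
  have Am: "\<And>u. u \<in> H \<Longrightarrow> A u \<in> H" unfolding H_def A_def using pi_op_RL2[OF piA ab] .
  have Qm: "\<And>u. u \<in> H \<Longrightarrow> Q u \<in> H" unfolding H_def Q_def using pi_op_RL2[OF piQ ab] .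
  have Bm: "\<And>u. u \<in> W \<Longrightarrow> B u \<in> H" unfolding H_def W_def B_def using pi_op_RL2[OF piB ab] .
  have Cm: "\<And>u. u \<in> H \<Longrightarrow> C u \<in> Z" unfolding H_def Z_def C_def using pi_op_RL2[OF piC ab] .
  have Qsym: "\<And>u v. u \<in> H \<Longrightarrow> v \<in> H \<Longrightarrow> rl2_inner a b (Q u) v = rl2_inner a b u (Q v)"
    using Q_psd unfolding op_psd_def by blast
  obtain K where K: "\<And>u. u \<in> H \<Longrightarrow> rl2_norm a b (Q u) \<le> K * rl2_norm a b u"
    using pi_op_bound[OF piQ ab] unfolding H_def Q_def by blast
  have Qlip: "\<And>u v. u \<in> H \<Longrightarrow> v \<in> H \<Longrightarrow> rl2_norm a b (rl2_sub (Q u) (Q v)) \<le> K * rl2_norm a b (rl2_sub u v)"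
    using Q_lip[of a b m n Q K] Qm Qsym K unfolding H_def by blast
  have main: "rl2_norm a b (C (x t)) \<le> \<gamma>"
    if v: "v \<in> W" and v1: "rl2_norm a b v = 1" and x: "pie_solution a b H T A B v x" and t: "t \<ge> 0" for v x t
    using conds
  proof
    assume c: "op_le a b W (\<lambda>v. Bs (Q (B v))) (\<lambda>v. v) \<and>
        op_le a b H (\<lambda>u. rl2_add (As (Q (T u))) (Ts (Q (A u)))) (op_zero m n) \<and>
        op_le a b H (\<lambda>u. rl2_scale (1 / \<gamma>^2) (Cs (C u))) (\<lambda>u. Ts (Q (T u)))"
    have neg: "rl2_inner a b (A h) (Q (T h)) \<le> 0" if h: "h \<in> H" for h
    proof -
      have 1: "As (Q (T h)) \<in> H" using adj_map[OF adjA Qm[OF Tm[OF h]]] .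
      have 2: "Ts (Q (A h)) \<in> H" using adj_map[OF adjT Qm[OF Am[OF h]]] .
      have "0 \<le> rl2_inner a b h (rl2_sub (op_zero m n h) (rl2_add (As (Q (T h))) (Ts (Q (A h)))))"
        using opl_ge[of a b H _ "op_zero m n", OF _ h] c by blast
      also have "\<dots> = - rl2_inner a b h (As (Q (T h))) - rl2_inner a b h (Ts (Q (A h)))"
        using h 1 2 unfolding H_def by (rule inner_zero_sub_add)
      also have "\<dots> = - rl2_inner a b (A h) (Q (T h)) - rl2_inner a b (T h) (Q (A h))"
        using adj_eq[OF adjA h Qm[OF Tm[OF h]]] adj_eq[OF adjT h Qm[OF Am[OF h]]] by simp
      also have "rl2_inner a b (T h) (Q (A h)) = rl2_inner a b (A h) (Q (T h))"
        using Qsym[OF Tm[OF h] Am[OF h]] inner_commute[OF Qm[OF Tm[OF h], unfolded H_def] Am[OF h, unfolded H_def]]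
      by simp
      finally show ?thesis by simp
    qed
    have ly: "rl2_inner a b (T (x t)) (Q (T (x t))) \<le> rl2_inner a b (T (x 0)) (Q (T (x 0)))"
      apply (rule lyapunov[where w="\<lambda>\<tau>. A (x \<tau>)" and K=K and y="\<lambda>\<tau>. T (x \<tau>)", of a b m n Q t])
      using Qm Qsym Qlip Tm Am sol_H[OF x] sol_deriv[OF x] neg t unfolding H_def by auto
    have x0: "x 0 \<in> H" using sol_H[OF x] by simp
    have "rl2_inner a b (T (x 0)) (Q (T (x 0))) = rl2_inner a b (B v) (Q (B v))"
      using Q_consistent[of a b m n Q] Qm Qsym Tm[OF x0] Bm[OF v] sol_init[OF x] unfolding H_def by blast
    also have "\<dots> = rl2_inner a b v (Bs (Q (B v)))" using adj_eq[OF adjB v Qm[OF Bm[OF v]]] .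
    also have "\<dots> \<le> rl2_inner a b v v"
    proof -
      have "0 \<le> rl2_inner a b v (rl2_sub v (Bs (Q (B v))))" using opl_ge[of a b W _ "\<lambda>v. v", OF _ v] c by blast
      also have "\<dots> = rl2_inner a b v v - rl2_inner a b v (Bs (Q (B v)))"
        using inner_sub_right v adj_map[OF adjB Qm[OF Bm[OF v]]] unfolding W_def by blast
      finally show ?thesis by simp
    qed
    also have "\<dots> = 1" using norm_sq[of v a b nw 0] v v1 unfolding W_def by simp
    finally have V1: "rl2_inner a b (T (x t)) (Q (T (x t))) \<le> 1" using ly by simp
    have xt: "x t \<in> H" using sol_H[OF x t] .
    have CxZ: "C (x t) \<in> Z" using Cm[OF xt] .
    have Csx: "Cs (C (x t)) \<in> H" using adj_map[OF adjC CxZ] .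
    have TQT: "Ts (Q (T (x t))) \<in> H" using adj_map[OF adjT Qm[OF Tm[OF xt]]] .
    have "0 \<le> rl2_inner a b (x t) (rl2_sub (Ts (Q (T (x t)))) (rl2_scale (1/\<gamma>^2) (Cs (C (x t)))))"
      using opl_ge[of a b H _ "\<lambda>u. Ts (Q (T u))", OF _ xt] c by blast
    also have "\<dots> = rl2_inner a b (x t) (Ts (Q (T (x t)))) - (1/\<gamma>^2) * rl2_inner a b (x t) (Cs (C (x t)))"
      using xt Csx TQT RL2_scale[of "Cs (C (x t))" a b m n] unfolding H_def
      by (simp add: inner_sub_right inner_scale_right)
    also have "rl2_inner a b (x t) (Ts (Q (T (x t)))) = rl2_inner a b (T (x t)) (Q (T (x t)))"
      using adj_eq[OF adjT xt Qm[OF Tm[OF xt]]] by simp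
    also have "rl2_inner a b (x t) (Cs (C (x t))) = (rl2_norm a b (C (x t)))^2"
      using adj_eq[OF adjC xt CxZ] norm_sq[of "C (x t)" a b nz 0] CxZ unfolding Z_def by simp
    finally have "(1/\<gamma>^2) * (rl2_norm a b (C (x t)))^2 \<le> 1" using V1 by simp
    then have "(rl2_norm a b (C (x t)))^2 \<le> \<gamma>^2" using gamma_pos by (simp add: field_simps)
    from power2_le_imp_le[OF this] show ?thesis using gamma_pos by simp
  next
    assume c: "op_le a b Z (\<lambda>w. C (Q (Cs w))) (\<lambda>w. w) \<and>
        op_le a b H (\<lambda>u. rl2_add (A (Q (Ts u))) (T (Q (As u)))) (op_zero m n) \<and>
        op_le a b H (\<lambda>u. rl2_scale (1 / \<gamma>^2) (B (Bs u))) (\<lambda>u. T (Q (Ts u)))"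
    have xt: "x t \<in> H" using sol_H[OF x t] .
    have CxZ: "C (x t) \<in> Z" using Cm[OF xt] .
    define z where "z = C (x t)"
    have zZ: "z \<in> Z" using CxZ z_def by simp
    show ?thesis
    proof (cases "rl2_norm a b z = 0")
      case True then show ?thesis using gamma_pos z_def by simp
    next
      case False
      then have zpos: "rl2_norm a b z > 0" using norm_nonneg[of a b z] by simp
      define vb where "vb = rl2_scale (1 / rl2_norm a b z) z"
      have vbZ: "vb \<in> Z" unfolding vb_def Z_def using zZ RL2_scale unfolding Z_def by blast
      have vb1: "rl2_norm a b vb = 1" unfolding vb_def using norm_scale[of z a b nz 0] zZ zpos
        unfolding Z_def by simp
      obtain xb where xb: "pie_solution a b H Ts As Cs vb xb"
        using wp_dual vbZ unfolding pie_well_posed_def by blast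
      have xbH: "\<And>\<tau>. \<tau> \<ge> 0 \<Longrightarrow> xb \<tau> \<in> H" using sol_H[OF xb] .
      have xb0: "xb 0 \<in> H" using xbH by simp
      have xbt: "xb t \<in> H" using xbH t by simp
      have x0: "x 0 \<in> H" using sol_H[OF x] by simp
      have "rl2_norm a b z = rl2_inner a b z vb"
        unfolding vb_def using inner_scale_right[of z a b nz 0 z] norm_sq[of z a b nz 0] zZ zpos
        unfolding Z_def by (simp add: power2_eq_square) (metis nonzero_mult_div_cancel_left less_irrefl)
      also have "\<dots> = rl2_inner a b (x t) (Cs vb)" unfolding z_def using adj_eq[OF adjC xt vbZ] .
      also have "\<dots> = rl2_inner a b (x t) (Ts (xb 0))"
        using dist0_inner[of "Ts (xb 0)" a b m n "Cs vb" "x t"] sol_init[OF xb] adj_map[OF adjT xb0]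
          adj_map[OF adjC vbZ] xt inner_commute[of "x t" a b m n] unfolding H_def by metis
      also have "\<dots> = rl2_inner a b (T (x t)) (xb 0)" using adj_eq[OF adjT xt xb0] by simp
      also have "\<dots> = rl2_inner a b (T (x 0)) (xb t)"
        using duality[of a b m n T A Ts As B v x Cs vb xb t] Tm Am adjT adjA x xb t unfolding H_def by blast
      also have "\<dots> = rl2_inner a b (B v) (xb t)"
        using dist0_inner[OF _ _ _ sol_init[OF x]] Tm[OF x0] Bm[OF v] xbt unfolding H_def by blast
      also have "\<dots> = rl2_inner a b v (Bs (xb t))" using adj_eq[OF adjB v xbt] .
      also have "\<dots> \<le> rl2_norm a b v * rl2_norm a b (Bs (xb t))"
        using inner_CS[of v a b nw 0 "Bs (xb t)"] v adj_map[OF adjB xbt] unfolding W_def by simp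
      finally have zb: "rl2_norm a b z \<le> rl2_norm a b (Bs (xb t))" using v1 by simp
      have negd: "rl2_inner a b (As h) (Q (Ts h)) \<le> 0" if h: "h \<in> H" for h
      proof -
        have Tsh: "Ts h \<in> H" using adj_map[OF adjT h] .
        have Ash: "As h \<in> H" using adj_map[OF adjA h] .
        have 1: "A (Q (Ts h)) \<in> H" using Am[OF Qm[OF Tsh]] .
        have 2: "T (Q (As h)) \<in> H" using Tm[OF Qm[OF Ash]] .
        have "0 \<le> rl2_inner a b h (rl2_sub (op_zero m n h) (rl2_add (A (Q (Ts h))) (T (Q (As h)))))"
          using opl_ge[of a b H _ "op_zero m n", OF _ h] c by blast
        also have "\<dots> = - rl2_inner a b h (A (Q (Ts h))) - rl2_inner a b h (T (Q (As h)))"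
          using h 1 2 unfolding H_def by (rule inner_zero_sub_add)
        also have "rl2_inner a b h (A (Q (Ts h))) = rl2_inner a b (As h) (Q (Ts h))"
          using adj_eq_sym[OF adjA[unfolded H_def] Qm[OF Tsh, unfolded H_def] h[unfolded H_def] 1[unfolded H_def]]
            inner_commute[OF Ash[unfolded H_def] Qm[OF Tsh, unfolded H_def]] by simp
        also have "rl2_inner a b h (T (Q (As h))) = rl2_inner a b (Ts h) (Q (As h))"
          using adj_eq_sym[OF adjT[unfolded H_def] Qm[OF Ash, unfolded H_def] h[unfolded H_def] 2[unfolded H_def]]
            inner_commute[OF Tsh[unfolded H_def] Qm[OF Ash, unfolded H_def]] by simp
        also have "rl2_inner a b (Ts h) (Q (As h)) = rl2_inner a b (As h) (Q (Ts h))"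
          using Qsym[OF Tsh Ash] inner_commute[OF Qm[OF Tsh, unfolded H_def] Ash[unfolded H_def]]
          by simp
        finally show ?thesis by simp
      qed
      have ly: "rl2_inner a b (Ts (xb t)) (Q (Ts (xb t))) \<le> rl2_inner a b (Ts (xb 0)) (Q (Ts (xb 0)))"
        apply (rule lyapunov[where w="\<lambda>\<tau>. As (xb \<tau>)" and K=K and y="\<lambda>\<tau>. Ts (xb \<tau>)", of a b m n Q t])
        using Qm Qsym Qlip adj_map[OF adjT] adj_map[OF adjA] xbH sol_deriv[OF xb] negd t
        unfolding H_def by auto
      have "rl2_inner a b (Ts (xb 0)) (Q (Ts (xb 0))) = rl2_inner a b (Cs vb) (Q (Cs vb))"
        using Q_consistent[of a b m n Q] Qm Qsym adj_map[OF adjT xb0] adj_map[OF adjC vbZ] sol_init[OF xb]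
        unfolding H_def by blast
      also have "\<dots> = rl2_inner a b (C (Q (Cs vb))) vb"
        using adj_eq[OF adjC Qm[OF adj_map[OF adjC vbZ]] vbZ]
          inner_commute[OF adj_map[OF adjC vbZ, unfolded H_def] Qm[OF adj_map[OF adjC vbZ], unfolded H_def]]
        by simp
      also have "\<dots> = rl2_inner a b vb (C (Q (Cs vb)))"
        using inner_commute[OF vbZ[unfolded Z_def] Cm[OF Qm[OF adj_map[OF adjC vbZ]], unfolded Z_def]] by simp
      also have "\<dots> \<le> rl2_inner a b vb vb"
      proof -
        have "0 \<le> rl2_inner a b vb (rl2_sub vb (C (Q (Cs vb))))" using opl_ge[of a b Z _ "\<lambda>w. w", OF _ vbZ] c by blast
        also have "\<dots> = rl2_inner a b vb vb - rl2_inner a b vb (C (Q (Cs vb)))"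
          using inner_sub_right vbZ Cm[OF Qm[OF adj_map[OF adjC vbZ]]] unfolding Z_def by blast
        finally show ?thesis by simp
      qed
      also have "\<dots> = 1" using norm_sq[of vb a b nz 0] vbZ vb1 unfolding Z_def by simp
      finally have V1: "rl2_inner a b (Ts (xb t)) (Q (Ts (xb t))) \<le> 1" using ly by simp
      have BsH: "Bs (xb t) \<in> W" using adj_map[OF adjB xbt] .
      have BB: "B (Bs (xb t)) \<in> H" using Bm[OF BsH] .
      have TQT: "T (Q (Ts (xb t))) \<in> H" using Tm[OF Qm[OF adj_map[OF adjT xbt]]] .
      have "0 \<le> rl2_inner a b (xb t) (rl2_sub (T (Q (Ts (xb t)))) (rl2_scale (1/\<gamma>^2) (B (Bs (xb t)))))"
        using opl_ge[of a b H _ "\<lambda>u. T (Q (Ts u))", OF _ xbt] c by blast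
      also have "\<dots> = rl2_inner a b (xb t) (T (Q (Ts (xb t)))) - (1/\<gamma>^2) * rl2_inner a b (xb t) (B (Bs (xb t)))"
        using xbt BB TQT RL2_scale[of "B (Bs (xb t))" a b m n] unfolding H_def
        by (simp add: inner_sub_right inner_scale_right)
      also have "rl2_inner a b (xb t) (T (Q (Ts (xb t)))) = rl2_inner a b (Ts (xb t)) (Q (Ts (xb t)))"
        using adj_eq_sym[OF adjT[unfolded H_def] Qm[OF adj_map[OF adjT xbt], unfolded H_def]
            xbt[unfolded H_def] TQT[unfolded H_def]]
          inner_commute[OF adj_map[OF adjT xbt, unfolded H_def] Qm[OF adj_map[OF adjT xbt], unfolded H_def]]
        by simp
      also have "rl2_inner a b (xb t) (B (Bs (xb t))) = (rl2_norm a b (Bs (xb t)))^2"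
        using adj_eq_sym[OF adjB[unfolded W_def H_def] BsH[unfolded W_def] xbt[unfolded H_def] BB[unfolded H_def]]
          norm_sq[of "Bs (xb t)" a b nw 0] BsH unfolding W_def by simp
      finally have "(1/\<gamma>^2) * (rl2_norm a b (Bs (xb t)))^2 \<le> 1" using V1 by simp
      then have "(rl2_norm a b (Bs (xb t)))^2 \<le> \<gamma>^2" using gamma_pos by (simp add: field_simps)
      from power2_le_imp_le[OF this] have "rl2_norm a b (Bs (xb t)) \<le> \<gamma>"
        using gamma_pos by simp
      then show ?thesis using zb z_def by simp
    qed
  qed
  show ?thesis unfolding ip_norm_def
    by (rule SUP_least) (auto intro!: main)
qed


end
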